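(* Let $F$ be a commutative field, $1\le h\le n-1$, and let $K$ be a linear complex of $h$-subspaces in $\mathrm{PG}(n,F)$. Then: (a) the partial map $\uparrow K:\Gamma(n,h-1,F)\to\mathrm{PG}(n,F)^*$ is a linear mapping with non-empty domain satisfying the null property $U\subseteq U^{\uparrow K}$ for all $U\in\mathbb D(\uparrow K)$ (i.e. it is a generalised null polarity); (b) the image of $\uparrow K$ spans a subspace of $\mathrm{PG}(n,F)^*$ of dimension at least $h$.
   Context: A $d$-subspace is a projective subspace of dimension $d$. Linear complex: with $N=\binom{n+1}{h+1}-1$ and Plücker embedding $\wp_{n,h}$ (sending the span of independent $v_0,\dots,v_h\in F^{n+1}$ to $F(v_0\wedge\cdots\wedge v_h)\in\mathrm{PG}(N,F)$, image the Grassmann variety $\mathcal G_{n,h}$), a linear complex of $h$-subspaces is the set of $h$-subspaces whose Plücker image lies in a fixed hyperplane of $\mathrm{PG}(N,F)$. Grassmannian $\Gamma(n,k,F)$: points are $k$-subspaces, lines are pencils $\{X: U\subset X\subset W,\dim X=k\}$ with $\dim U=k-1,\dim W=k+1$. $\mathrm{PG}(n,F)^*$ is the dual projective space. An $(h-1)$-subspace $U$ is singular for $K$ if every $h$-subspace containing $U$ lies in $K$; for non-singular $U$ there is a unique hyperplane $E$ (the polar hyperplane of $U$) such that an $h$-subspace $X\supseteq U$ belongs to $K$ iff $X\subseteq E$; $E$ is the union of the elements of $K$ containing $U$. The partial map $\uparrow K$ on $(h-1)$-subspaces has exceptional set the singular $(h-1)$-subspaces and sends each non-singular $U$ to its polar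 hyperplane. A partial map $\chi$ (defined on domain $\mathbb D(\chi)$, exceptional set $\mathbb A(\chi)$ = complement, $\phi^\chi=\{X^\chi:X\in\phi\cap\mathbb D(\chi)\}$) between semilinear spaces is a linear mapping if for each line $\ell$ exactly one holds: (i) $\ell^\chi$ is a line and $\chi$ maps $\ell$ bijectively onto it; (ii) $\ell^\chi$ is one point and $|\ell\cap\mathbb A(\chi)|=1$; (iii) $\ell\subseteq\mathbb A(\chi)$. *)

theory Defs
  imports Main "HOL-Combinatorics.Permutations"
begin

definition vecs :: "nat \<Rightarrow> (nat \<Rightarrow> 'a::field) set" where
  "vecs n = {v. \<forall>i>n. v i = 0}"

definition lincomb :: "(nat \<Rightarrow> 'a::field) list \<Rightarrow> (nat \<Rightarrow> 'a) \<Rightarrow> (nat \<Rightarrow> 'a)" where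
  "lincomb vs a = (\<lambda>k. \<Sum>i<length vs. a i * (vs ! i) k)"

definition lspan :: "(nat \<Rightarrow> 'a::field) list \<Rightarrow> (nat \<Rightarrow> 'a) set" where
  "lspan vs = range (lincomb vs)"

definition lindep_free :: "(nat \<Rightarrow> 'a::field) list \<Rightarrow> bool" where
  "lindep_free vs \<longleftrightarrow> (\<forall>a. lincomb vs a = (\<lambda>_. 0) \<longrightarrow> (\<forall>i<length vs. a i = 0))"

text \<open>vsub n k X: X is a vector subspace of F^(n+1) of (vector) dimension k, i.e. a
  projective subspace of PG(n,F) of projective dimension k-1 (given as its set of vectors).\<close>
definition vsub :: "nat \<Rightarrow> nat \<Rightarrow> (nat \<Rightarrow> 'a::field) set \<Rightarrow> bool" where
  "vsub n k X \<longleftrightarrow> (\<exists>vs. length vs = k \<and> set vs \<subseteq> vecs n \<and> lindep_free vs \<and> X = lspan vs)"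

definition plucker_coord :: "nat \<Rightarrow> (nat \<Rightarrow> 'a::field) list \<Rightarrow> nat set \<Rightarrow> 'a" where
  "plucker_coord h vs I =
     (\<Sum>\<sigma> | \<sigma> permutes {..h}. of_int (sign \<sigma>) * (\<Prod>i\<le>h. (vs ! i) (sorted_list_of_set I ! \<sigma> i)))"

definition plucker_index :: "nat \<Rightarrow> nat \<Rightarrow> nat set set" where
  "plucker_index n h = {I. I \<subseteq> {..n} \<and> card I = h + 1}"

definition linear_complex :: "nat \<Rightarrow> nat \<Rightarrow> (nat \<Rightarrow> 'a::field) set set \<Rightarrow> bool" where
  "linear_complex n h K \<longleftrightarrow>
     (\<exists>c :: nat set \<Rightarrow> 'a. (\<exists>I\<in>plucker_index n h. c I \<noteq> 0) \<and>
        K = {X. \<exists>vs. length vs = h + 1 \<and> set vs \<subseteq> vecs n \<and> lindep_free vs \<and> X = lspan vs \<and>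
                     (\<Sum>I\<in>plucker_index n h. c I * plucker_coord h vs I) = 0})"

text \<open>Points: k-subspaces (vector dimension k+1). Lines: pencils {X : U <= X <= W}
  with U a (k-1)-subspace (vector dim k) and W a (k+1)-subspace (vector dim k+2).\<close>
definition gr_points :: "nat \<Rightarrow> nat \<Rightarrow> (nat \<Rightarrow> 'a::field) set set" where
  "gr_points n k = {X. vsub n (k + 1) X}"

definition gr_lines :: "nat \<Rightarrow> nat \<Rightarrow> (nat \<Rightarrow> 'a::field) set set set" where
  "gr_lines n k = {{X. vsub n (k + 1) X \<and> U \<subseteq> X \<and> X \<subseteq> W} | U W.
                     vsub n k U \<and> vsub n (k + 2) W \<and> U \<subseteq> W}"

text \<open>Subspaces of the dual space of projective dimension m: the sets of hyperplanes
  containing a fixed subspace of vector dimension n - m.\<close>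
definition dual_subspace :: "nat \<Rightarrow> nat \<Rightarrow> (nat \<Rightarrow> 'a::field) set set \<Rightarrow> bool" where
  "dual_subspace n m T \<longleftrightarrow> m \<le> n \<and> (\<exists>W. vsub n (n - m) W \<and> T = {E. vsub n n E \<and> W \<subseteq> E})"

definition dual_points :: "nat \<Rightarrow> (nat \<Rightarrow> 'a::field) set set" where
  "dual_points n = {E. vsub n n E}"

definition dual_lines :: "nat \<Rightarrow> (nat \<Rightarrow> 'a::field) set set set" where
  "dual_lines n = {T. dual_subspace n 1 T}"

definition dual_span_dim :: "nat \<Rightarrow> (nat \<Rightarrow> 'a::field) set set \<Rightarrow> nat" where
  "dual_span_dim n S = (LEAST m. \<exists>T. dual_subspace n m T \<and> S \<subseteq> T)"

text \<open>A partial map with domain D (a subset of the points P1) given by f on D.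
  The image of a line l is f ` (l \<inter> D); the exceptional set is P1 - D.\<close>
definition linear_mapping ::
  "'p set \<Rightarrow> 'p set set \<Rightarrow> 'q set \<Rightarrow> 'q set set \<Rightarrow> 'p set \<Rightarrow> ('p \<Rightarrow> 'q) \<Rightarrow> bool" where
  "linear_mapping P1 L1 P2 L2 D f \<longleftrightarrow>
     D \<subseteq> P1 \<and> f ` D \<subseteq> P2 \<and>
     (\<forall>l\<in>L1.
        let c1 = (l \<subseteq> D \<and> f ` l \<in> L2 \<and> inj_on f l);
            c2 = ((\<exists>p. f ` (l \<inter> D) = {p}) \<and> (\<exists>q. l - D = {q}));
            c3 = (l \<inter> D = {})
        in (c1 \<and> \<not> c2 \<and> \<not> c3) \<or> (\<not> c1 \<and> c2 \<and> \<not> c3) \<or> (\<not> c1 \<and> \<not> c2 \<and> c3))"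

definition singular :: "nat \<Rightarrow> nat \<Rightarrow> (nat \<Rightarrow> 'a::field) set set \<Rightarrow> (nat \<Rightarrow> 'a) set \<Rightarrow> bool" where
  "singular n h K U \<longleftrightarrow> vsub n h U \<and> (\<forall>X. vsub n (h + 1) X \<and> U \<subseteq> X \<longrightarrow> X \<in> K)"

text \<open>Domain of the partial map up K: the non-singular (h-1)-subspaces.\<close>
definition nonsingular :: "nat \<Rightarrow> nat \<Rightarrow> (nat \<Rightarrow> 'a::field) set set \<Rightarrow> (nat \<Rightarrow> 'a) set set" where
  "nonsingular n h K = {U. vsub n h U \<and> \<not> singular n h K U}"

definition polar :: "nat \<Rightarrow> nat \<Rightarrow> (nat \<Rightarrow> 'a::field) set set \<Rightarrow> (nat \<Rightarrow> 'a) set \<Rightarrow> (nat \<Rightarrow> 'a) set" where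
  "polar n h K U = (THE E. vsub n n E \<and>
      (\<forall>X. vsub n (h + 1) X \<and> U \<subseteq> X \<longrightarrow> (X \<in> K \<longleftrightarrow> X \<subseteq> E)))"

end

theory Submission imports Defs "HOL-Library.Function_Algebras" "Jordan_Normal_Form.Determinant" begin


definition fscale :: "'a::field \<Rightarrow> (nat \<Rightarrow> 'a) \<Rightarrow> (nat \<Rightarrow> 'a)" where
  "fscale c v = (\<lambda>k. c * v k)"

interpretation fv: vector_space "fscale :: 'a::field \<Rightarrow> _"
  by unfold_locales (auto simp: fscale_def algebra_simps func_plus)

lemma fsum_apply: "(\<Sum>i\<in>A. f i) k = (\<Sum>i\<in>A. f i k)" for f :: "_ \<Rightarrow> nat \<Rightarrow> 'a::field"
  by (induction A rule: infinite_finite_induct) (auto simp: func_plus func_zero)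

lemma fscale_apply[simp]: "fscale c v k = c * v k" by (simp add: fscale_def)

lemma lincomb_sum: "lincomb vs a = (\<Sum>i<length vs. fscale (a i) (vs!i))"
  by (rule ext) (simp add: lincomb_def fsum_apply)

lemma sum_nth_distinct: "distinct vs \<Longrightarrow> (\<Sum>i<length vs. g (vs!i)) = (\<Sum>v\<in>set vs. g v)"
  by (simp add: sum.distinct_set_conv_list sum_list_sum_nth atLeast0LessThan)

lemma lincomb_delta: "i < length vs \<Longrightarrow> lincomb vs (\<lambda>l. if l = i then 1 else 0) = vs ! i"
proof (rule ext)
  fix k assume i: "i < length vs"
  have "(\<Sum>l<length vs. (if l = i then 1 else 0) * (vs ! l) k) = (\<Sum>l<length vs. if l = i then (vs!l) k else 0)"
    by (rule sum.cong) auto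
  then show "lincomb vs (\<lambda>l. if l = i then 1 else 0) k = (vs ! i) k"
    using i by (simp add: lincomb_def)
qed

lemma lincomb_add: "lincomb vs (\<lambda>l. a l + b l) = lincomb vs a + lincomb vs b"
  by (rule ext) (simp add: lincomb_def func_plus algebra_simps sum.distrib)

lemma lincomb_scale: "lincomb vs (\<lambda>l. c * a l) = fscale c (lincomb vs a)"
  by (rule ext) (simp add: lincomb_def sum_distrib_left algebra_simps)

lemma lincomb_zero: "lincomb vs (\<lambda>l. 0) = 0"
  by (rule ext) (simp add: lincomb_def func_zero)

lemma lspan_eq: "lspan vs = fv.span (set vs)"
proof
  show "lspan vs \<subseteq> fv.span (set vs)"
    unfolding lspan_def lincomb_sum
    by (auto intro!: fv.span_sum fv.span_scale intro: fv.span_base)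
  have sub: "fv.subspace (lspan vs)"
    unfolding fv.subspace_def lspan_def
  proof (intro conjI ballI allI)
    show "0 \<in> range (lincomb vs)" using lincomb_zero[of vs] by (metis rangeI)
    fix x y assume "x \<in> range (lincomb vs)" "y \<in> range (lincomb vs)"
    then obtain a b where "x = lincomb vs a" "y = lincomb vs b" by auto
    then show "x + y \<in> range (lincomb vs)" using lincomb_add[of vs a b] by (metis rangeI)
  next
    fix c x assume "x \<in> range (lincomb vs)"
    then obtain a where "x = lincomb vs a" by auto
    then show "fscale c x \<in> range (lincomb vs)" using lincomb_scale[of vs c a] by (metis rangeI)
  qed
  have "set vs \<subseteq> lspan vs"
    unfolding lspan_def by (auto simp: in_set_conv_nth) (metis lincomb_delta rangeI)
  then show "fv.span (set vs) \<subseteq> lspan vs" using fv.span_minimal sub by blast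
qed

abbreviation sp :: "(nat \<Rightarrow> 'a::field) set \<Rightarrow> (nat \<Rightarrow> 'a) set" where "sp \<equiv> fv.span"
abbreviation ind :: "(nat \<Rightarrow> 'a::field) set \<Rightarrow> bool" where "ind \<equiv> fv.independent"

lemma lincomb_distinct: "distinct vs \<Longrightarrow> lincomb vs (\<lambda>i. u (vs!i)) = (\<Sum>v\<in>set vs. fscale (u v) v)"
  unfolding lincomb_sum by (rule sum_nth_distinct)

lemma lindep_free_iff: "lindep_free vs \<longleftrightarrow> distinct vs \<and> ind (set vs)"
proof
  assume L: "lindep_free vs"
  have D: "distinct vs"
  proof (rule ccontr)
    assume "\<not> distinct vs"
    then obtain i j where ij: "i < length vs" "j < length vs" "i \<noteq> j" "vs!i = vs!j"
      by (metis distinct_conv_nth)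
    let ?a = "\<lambda>l. (if l = i then 1 else 0) + (-1) * (if l = j then 1 else 0)"
    have "lincomb vs ?a = vs!i + fscale (-1) (vs!j)"
      unfolding lincomb_add lincomb_scale lincomb_delta[OF ij(1)] lincomb_delta[OF ij(2)] ..
    also have "\<dots> = (\<lambda>_. 0)" using ij(4) by (simp add: func_plus fscale_def)
    finally have eq: "lincomb vs ?a = (\<lambda>_. 0)" .
    show False using L[unfolded lindep_free_def, rule_format, OF eq ij(1)] ij by simp
  qed
  moreover have "ind (set vs)"
  proof
    assume "fv.dependent (set vs)"
    then obtain u where u: "\<exists>v\<in>set vs. u v \<noteq> 0" "(\<Sum>v\<in>set vs. fscale (u v) v) = 0"
      by (auto simp: fv.dependent_finite)
    have z0: "lincomb vs (\<lambda>i. u (vs!i)) = (\<lambda>_. 0)" using lincomb_distinct[OF D, of u] u(2) by (simp add: func_zero)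
    have "\<forall>i<length vs. u (vs!i) = 0" using L[unfolded lindep_free_def, rule_format, OF z0] by simp
    then show False using u(1) by (auto simp: in_set_conv_nth)
  qed
  ultimately show "distinct vs \<and> ind (set vs)" by blast
next
  assume A: "distinct vs \<and> ind (set vs)"
  show "lindep_free vs" unfolding lindep_free_def
  proof (intro allI impI)
    fix a i assume z: "lincomb vs a = (\<lambda>_. 0)" and i: "i < length vs"
    define u where "u v = a (SOME i. i < length vs \<and> vs!i = v)" for v
    have ui: "u (vs!k) = a k" if "k < length vs" for k
    proof -
      have "(SOME i. i < length vs \<and> vs!i = vs!k) = k"
        using A that by (intro some_equality) (auto simp: nth_eq_iff_index_eq)
      then show ?thesis by (simp add: u_def)
    qed
    have "lincomb vs (\<lambda>i. u (vs!i)) = lincomb vs a"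
      unfolding lincomb_def by (rule ext, rule sum.cong) (auto simp: ui)
    then have "(\<Sum>v\<in>set vs. fscale (u v) v) = 0" using z lincomb_distinct[of vs u] A by (simp add: func_zero)
    then have "\<forall>v\<in>set vs. u v = 0" using A by (auto simp: fv.dependent_finite)
    then show "a i = 0" using ui[OF i] i by auto
  qed
qed

lemma vsub_iff: "vsub n k X \<longleftrightarrow> (\<exists>B. finite B \<and> card B = k \<and> B \<subseteq> vecs n \<and> ind B \<and> X = sp B)"
proof
  assume "vsub n k X"
  then obtain vs where "length vs = k" "set vs \<subseteq> vecs n" "lindep_free vs" "X = lspan vs"
    by (auto simp: vsub_def)
  then show "\<exists>B. finite B \<and> card B = k \<and> B \<subseteq> vecs n \<and> ind B \<and> X = sp B"
    by (intro exI[of _ "set vs"]) (auto simp: lindep_free_iff lspan_eq distinct_card)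
next
  assume "\<exists>B. finite B \<and> card B = k \<and> B \<subseteq> vecs n \<and> ind B \<and> X = sp B"
  then obtain B where B: "finite B" "card B = k" "B \<subseteq> vecs n" "ind B" "X = sp B" by blast
  obtain vs where "set vs = B" "distinct vs" using finite_distinct_list[OF B(1)] by blast
  then show "vsub n k X" unfolding vsub_def using B
    by (intro exI[of _ vs]) (auto simp: lindep_free_iff lspan_eq distinct_card)
qed

definition ee :: "nat \<Rightarrow> nat \<Rightarrow> 'a::field" where "ee i = (\<lambda>k. if k = i then 1 else 0)"

lemma inj_ee: "inj (ee :: nat \<Rightarrow> nat \<Rightarrow> 'a::field)"
  by (rule injI) (metis ee_def one_neq_zero)

lemma vecs_subspace: "fv.subspace (vecs n)"
  by (auto simp: fv.subspace_def vecs_def func_plus func_zero)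

lemma sum_ee: "v \<in> vecs n \<Longrightarrow> v = (\<Sum>i\<le>n. fscale (v i) (ee i))"
proof (rule ext)
  fix k assume v: "v \<in> vecs n"
  have "(\<Sum>i\<le>n. fscale (v i) (ee i)) k = (\<Sum>i\<le>n. if i = k then v k else 0)"
    unfolding fsum_apply by (rule sum.cong) (auto simp: ee_def)
  also have "\<dots> = v k" using v by (auto simp: vecs_def)
  finally show "v k = (\<Sum>i\<le>n. fscale (v i) (ee i)) k" by simp
qed

lemma vecs_span: "vecs n = sp ((ee :: nat \<Rightarrow> nat \<Rightarrow> 'a::field) ` {..n})"
proof
  show "vecs n \<subseteq> sp ((ee :: nat \<Rightarrow> nat \<Rightarrow> 'a::field) ` {..n})"
  proof
    fix v :: "nat \<Rightarrow> 'a" assume "v \<in> vecs n"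
    then have "v = (\<Sum>i\<le>n. fscale (v i) (ee i))" by (rule sum_ee)
    also have "\<dots> \<in> sp (ee ` {..n})" by (auto intro!: fv.span_sum fv.span_scale intro: fv.span_base)
    finally show "v \<in> sp (ee ` {..n})" .
  qed
  show "sp ((ee :: nat \<Rightarrow> nat \<Rightarrow> 'a::field) ` {..n}) \<subseteq> vecs n"
    by (rule fv.span_minimal[OF _ vecs_subspace]) (auto simp: vecs_def ee_def)
qed

lemma ind_ee: "ind ((ee :: nat \<Rightarrow> nat \<Rightarrow> 'a::field) ` {..n})"
proof
  assume "fv.dependent ((ee :: nat \<Rightarrow> nat \<Rightarrow> 'a::field) ` {..n})"
  then obtain u where u: "\<exists>v\<in>ee ` {..n}. u v \<noteq> (0::'a)" "(\<Sum>v\<in>ee ` {..n}. fscale (u v) v) = 0"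
    by (auto simp: fv.dependent_finite)
  have "(\<Sum>v\<in>ee ` {..n}. fscale (u v) v) = (\<Sum>i\<le>n. fscale (u (ee i)) (ee i))"
    by (rule sum.reindex_cong[OF inj_on_subset[OF inj_ee]]) auto
  then have Z: "(\<Sum>i\<le>n. fscale (u (ee i)) (ee i)) = 0" using u by simp
  have "u (ee k) = 0" if k: "k \<le> n" for k
  proof -
    have "0 = (\<Sum>i\<le>n. fscale (u (ee i)) (ee i)) k" using Z by (simp add: func_zero)
    also have "\<dots> = (\<Sum>i\<le>n. if i = k then u (ee k) else 0)"
      unfolding fsum_apply by (rule sum.cong) (auto simp: ee_def)
    also have "\<dots> = u (ee k)" using k by simp
    finally show ?thesis by simp
  qed
  then show False using u(1) by auto
qed

lemma card_ee: "card ((ee :: nat \<Rightarrow> nat \<Rightarrow> 'a::field) ` {..n}) = Suc n"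
  using card_image[OF inj_on_subset[OF inj_ee, of "{..n}"]] by simp

lemma vsub_vecs: "vsub n (Suc n) (vecs n :: (nat \<Rightarrow> 'a::field) set)"
  unfolding vsub_iff
  by (intro exI[of _ "(ee :: nat \<Rightarrow> nat \<Rightarrow> 'a::field) ` {..n}"])
     (auto simp: card_ee ind_ee vecs_span[symmetric], auto simp: vecs_def ee_def)

lemma span_eq_card:
  assumes B: "ind B" and C: "ind C" "finite C" and BC: "B \<subseteq> sp C" and cd: "card C \<le> card B"
  shows "sp B = sp C"
proof -
  have fB: "finite B" and cB: "card B \<le> card C" using fv.independent_span_bound[OF C(2) B BC] by auto
  have "C \<subseteq> sp B"
  proof
    fix x assume x: "x \<in> C"
    show "x \<in> sp B"
    proof (rule ccontr)
      assume nx: "x \<notin> sp B"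
      then have "ind (insert x B)" using fv.independent_insertI B by blast
      moreover have "insert x B \<subseteq> sp C" using BC x fv.span_base by blast
      ultimately have "card (insert x B) \<le> card C" using fv.independent_span_bound[OF C(2)] by blast
      moreover have "x \<notin> B" using nx fv.span_base by blast
      ultimately show False using fB cd by simp
    qed
  qed
  then show ?thesis using BC by (simp add: fv.span_eq)
qed


lemma vsub_subspace: "vsub n k X \<Longrightarrow> fv.subspace X \<and> X \<subseteq> vecs n"
  unfolding vsub_iff using fv.span_minimal[OF _ vecs_subspace] by blast

lemma vsub_card_le: "vsub n k X \<Longrightarrow> ind B' \<Longrightarrow> B' \<subseteq> X \<Longrightarrow> finite B' \<and> card B' \<le> k"
  unfolding vsub_iff using fv.independent_span_bound by metis

lemma vsub_basis_card:
  assumes "vsub n k X" "ind B'" "B' \<subseteq> X" "X \<subseteq> sp B'"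
  shows "finite B' \<and> card B' = k"
proof -
  have 1: "finite B'" "card B' \<le> k" using vsub_card_le assms by blast+
  obtain B where B: "finite B" "card B = k" "B \<subseteq> vecs n" "ind B" "X = sp B"
    using assms(1) unfolding vsub_iff by blast
  have "B \<subseteq> sp B'" using assms(4) B(5) fv.span_superset by blast
  then have "card B \<le> card B'" using fv.independent_span_bound[OF 1(1) B(4)] by blast
  then show ?thesis using 1 B by simp
qed

lemma vsub_span_eq: "vsub n k X \<Longrightarrow> ind B' \<Longrightarrow> B' \<subseteq> X \<Longrightarrow> k \<le> card B' \<Longrightarrow> X = sp B'"
proof -
  assume a: "vsub n k X" "ind B'" "B' \<subseteq> X" "k \<le> card B'"
  obtain B where B: "finite B" "card B = k" "B \<subseteq> vecs n" "ind B" "X = sp B"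
    using a(1) unfolding vsub_iff by blast
  have "sp B' = sp B" using span_eq_card[OF a(2) B(4) B(1)] a(3,4) B(2,5) by blast
  then show ?thesis using B(5) by simp
qed

lemma vsub_mono: "vsub n k X \<Longrightarrow> vsub n k' Y \<Longrightarrow> X \<subseteq> Y \<Longrightarrow> k \<le> k'"
proof -
  assume a: "vsub n k X" "vsub n k' Y" "X \<subseteq> Y"
  obtain B where B: "finite B" "card B = k" "B \<subseteq> vecs n" "ind B" "X = sp B"
    using a(1) unfolding vsub_iff by blast
  have "B \<subseteq> Y" using B(5) a(3) fv.span_superset by blast
  then show ?thesis using vsub_card_le[OF a(2) B(4)] B(2) by blast
qed

lemma vsub_eq: "vsub n k X \<Longrightarrow> vsub n k' Y \<Longrightarrow> X \<subseteq> Y \<Longrightarrow> k' \<le> k \<Longrightarrow> X = Y"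
proof -
  assume a: "vsub n k X" "vsub n k' Y" "X \<subseteq> Y" "k' \<le> k"
  obtain B where B: "finite B" "card B = k" "B \<subseteq> vecs n" "ind B" "X = sp B"
    using a(1) unfolding vsub_iff by blast
  have "Y = sp B" using vsub_span_eq[OF a(2) B(4)] a(3,4) B fv.span_superset by blast
  then show ?thesis using B by simp
qed

lemma vsub_extend:
  assumes X: "vsub n k X" and S: "S \<subseteq> X" "ind S"
  shows "\<exists>B. S \<subseteq> B \<and> B \<subseteq> X \<and> ind B \<and> finite B \<and> card B = k \<and> X = sp B"
proof -
  obtain B where B: "S \<subseteq> B" "B \<subseteq> X" "ind B" "X \<subseteq> sp B"
    using fv.maximal_independent_subset_extend[OF S(1,2)] by blast
  have "sp B \<subseteq> X" using B(2) vsub_subspace[OF X] fv.span_minimal by blast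
  then show ?thesis using B vsub_basis_card[OF X B(3,2,4)] by blast
qed

lemma span_insert_span: "sp (insert y (sp B)) = sp (insert y B)"
proof
  show "sp (insert y B) \<subseteq> sp (insert y (sp B))"
    by (rule fv.span_mono) (use fv.span_superset in blast)
  have "insert y (sp B) \<subseteq> sp (insert y B)"
    using fv.span_mono[of B "insert y B"] fv.span_base[of y "insert y B"] by blast
  then show "sp (insert y (sp B)) \<subseteq> sp (insert y B)"
    using fv.span_minimal fv.subspace_span by blast
qed

lemma vsub_insert:
  assumes X: "vsub n k X" and y: "y \<in> vecs n" "y \<notin> X"
  shows "vsub n (Suc k) (sp (insert y X))"
proof -
  obtain B where B: "finite B" "card B = k" "B \<subseteq> vecs n" "ind B" "X = sp B"
    using X unfolding vsub_iff by blast
  have "y \<notin> B" using y B fv.span_superset by blast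
  then show ?thesis unfolding vsub_iff
    using B y span_insert_span[of y B]
    by (intro exI[of _ "insert y B"]) (auto simp: fv.independent_insertI)
qed

lemma vsub_zero: "vsub n 0 {0}"
  unfolding vsub_iff by (intro exI[of _ "{}"]) (auto simp: fv.independent_empty)

definition linf :: "((nat \<Rightarrow> 'a::field) \<Rightarrow> 'a) \<Rightarrow> bool" where
  "linf f \<longleftrightarrow> (\<forall>a b x y. f (\<lambda>j. a * x j + b * y j) = a * f x + b * f y)"

lemma linf_add: "linf f \<Longrightarrow> f (x + y) = f x + f y"
proof -
  assume "linf f"
  then have "f (\<lambda>j. 1 * x j + 1 * y j) = 1 * f x + 1 * f y" unfolding linf_def by blast
  then show ?thesis by (simp add: func_plus)
qed

lemma linf_scale: "linf f \<Longrightarrow> f (fscale c x) = c * f x"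
proof -
  assume "linf f"
  then have "f (\<lambda>j. c * x j + 0 * x j) = c * f x + 0 * f x" unfolding linf_def by blast
  then show ?thesis by (simp add: fscale_def)
qed

lemma linf_diff: "linf f \<Longrightarrow> f (x - y) = f x - f y"
proof -
  assume "linf f"
  then have "f (\<lambda>j. 1 * x j + (-1) * y j) = 1 * f x + (-1) * f y" unfolding linf_def by blast
  moreover have "(\<lambda>j. 1 * x j + (-1) * y j) = x - y" by (auto simp: fun_diff_def)
  ultimately show ?thesis by simp
qed

lemma linf_zero: "linf f \<Longrightarrow> f 0 = 0"
  using linf_scale[of f 0 0] by (simp add: fscale_def func_zero)

lemma ker_subspace: "fv.subspace E \<Longrightarrow> linf f \<Longrightarrow> fv.subspace {y\<in>E. f y = 0}"
  unfolding fv.subspace_def by (auto simp: linf_add linf_scale linf_zero)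

lemma vsub_ker:
  assumes E: "vsub n (Suc k) E" and f: "linf f" and y0: "y0 \<in> E" "f y0 \<noteq> 0"
  shows "vsub n k {y\<in>E. f y = 0}"
proof -
  let ?S = "{y\<in>E. f y = 0}"
  have sE: "fv.subspace E" "E \<subseteq> vecs n" using vsub_subspace[OF E] by auto
  have sS: "fv.subspace ?S" using ker_subspace[OF sE(1) f] .
  obtain B where B: "B \<subseteq> ?S" "ind B" "?S \<subseteq> sp B" "card B = fv.dim ?S"
    using fv.basis_exists by blast
  have spB: "sp B = ?S" using fv.span_minimal[OF B(1) sS] B(3) by blast
  have ny: "y0 \<notin> sp B" using spB y0 by auto
  have ind: "ind (insert y0 B)" using fv.independent_insertI[OF ny B(2)] .
  have sub: "insert y0 B \<subseteq> E" using B(1) y0 by auto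
  have "E \<subseteq> sp (insert y0 B)"
  proof
    fix y assume y: "y \<in> E"
    let ?c = "f y / f y0"
    have "y - fscale ?c y0 \<in> ?S"
      using y y0 f sE(1) by (auto simp: linf_diff linf_scale fv.subspace_def fv.subspace_diff)
    then have "y - fscale ?c y0 \<in> sp B" using spB by simp
    then show "y \<in> sp (insert y0 B)" using fv.span_breakdown_eq by blast
  qed
  then have fc: "finite (insert y0 B)" "card (insert y0 B) = Suc k"
    using vsub_basis_card[OF E ind sub] by auto
  have "y0 \<notin> B" using ny fv.span_superset by blast
  then have "card B = k" "finite B" using fc by auto
  moreover have "B \<subseteq> vecs n" using B(1) sE(2) by blast
  ultimately show ?thesis unfolding vsub_iff using B(2) spB by metis
qed

lemma vsub_int:
  assumes X: "vsub n k X" and Y: "vsub n k' Y" and lt: "Suc n < k + k'"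
  shows "\<exists>z\<in>X \<inter> Y. z \<noteq> 0"
proof -
  obtain B where B: "finite B" "card B = k" "B \<subseteq> vecs n" "ind B" "X = sp B"
    using X unfolding vsub_iff by blast
  obtain C where C: "finite C" "card C = k'" "C \<subseteq> vecs n" "ind C" "Y = sp C"
    using Y unfolding vsub_iff by blast
  show ?thesis
  proof (cases "B \<inter> C = {}")
    case False
    then obtain z where "z \<in> B" "z \<in> C" by blast
    moreover then have "z \<noteq> 0" using B(4) fv.dependent_zero by blast
    ultimately show ?thesis using B C fv.span_superset by blast
  next
    case True
    have "\<not> ind (B \<union> C)"
    proof
      assume "ind (B \<union> C)"
      moreover have "B \<union> C \<subseteq> vecs n" using B C by auto
      ultimately have "card (B \<union> C) \<le> Suc n" using vsub_card_le[OF vsub_vecs] by blast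
      then show False using True card_Un_disjoint[OF B(1) C(1)] B C lt by simp
    qed
    then obtain u where u: "\<exists>v\<in>B \<union> C. u v \<noteq> 0" "(\<Sum>v\<in>B \<union> C. fscale (u v) v) = 0"
      using fv.dependent_finite[of "B \<union> C"] B(1) C(1) by auto
    let ?z = "\<Sum>v\<in>B. fscale (u v) v"
    have sum: "?z + (\<Sum>v\<in>C. fscale (u v) v) = 0"
      using u(2) by (simp only: sum.union_disjoint[OF B(1) C(1) True])
    have zX: "?z \<in> X" using B(5) by (auto intro!: fv.span_sum fv.span_scale intro: fv.span_base)
    have "(\<Sum>v\<in>C. fscale (u v) v) \<in> Y" using C(5) by (auto intro!: fv.span_sum fv.span_scale intro: fv.span_base)
    then have "- (\<Sum>v\<in>C. fscale (u v) v) \<in> Y" using C(5) fv.span_neg by blast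
    moreover have "?z = - (\<Sum>v\<in>C. fscale (u v) v)" using sum by (simp add: eq_neg_iff_add_eq_0)
    ultimately have zY: "?z \<in> Y" by simp
    have "?z \<noteq> 0"
    proof
      assume z0: "?z = 0"
      then have "\<forall>v\<in>B. u v = 0" using B(1,4) fv.dependent_finite by blast
      moreover have "(\<Sum>v\<in>C. fscale (u v) v) = 0" using sum z0 by simp
      then have "\<forall>v\<in>C. u v = 0" using C(1,4) fv.dependent_finite by blast
      ultimately show False using u(1) by blast
    qed
    then show ?thesis using zX zY by blast
  qed
qed



definition pmat :: "nat \<Rightarrow> (nat \<Rightarrow> 'a::field) list \<Rightarrow> nat set \<Rightarrow> 'a mat" where
  "pmat h vs I = mat (Suc h) (Suc h) (\<lambda>(i,j). (vs!i) (sorted_list_of_set I ! j))"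

lemma atMost_eq_atLeast0: "{0..<Suc h} = {..h}" by auto

lemma pc_det: "plucker_coord h vs I = det (pmat h vs I)"
proof -
  have "det (pmat h vs I) = (\<Sum>p \<in> {p. p permutes {..h}}. of_int (sign p) *
          (\<Prod>i\<in>{..h}. pmat h vs I $$ (i, p i)))"
    unfolding det_def by (simp add: pmat_def atMost_eq_atLeast0)
  also have "\<dots> = plucker_coord h vs I"
    unfolding plucker_coord_def
  proof (rule sum.cong[OF refl])
    fix p assume "p \<in> {p. p permutes {..h}}"
    then have p: "p permutes {..h}" by simp
    have "(\<Prod>i\<in>{..h}. pmat h vs I $$ (i, p i)) = (\<Prod>i\<le>h. (vs ! i) (sorted_list_of_set I ! p i))"
    proof (rule prod.cong[OF refl])
      fix i assume "i \<in> {..h}"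
      moreover then have "p i \<in> {..h}" using permutes_in_image[OF p] by simp
      ultimately show "pmat h vs I $$ (i, p i) = (vs ! i) (sorted_list_of_set I ! p i)"
        by (simp add: pmat_def)
    qed
    then show "of_int (sign p) * (\<Prod>i\<in>{..h}. pmat h vs I $$ (i, p i)) =
        of_int (sign p) * (\<Prod>i\<le>h. (vs ! i) (sorted_list_of_set I ! p i))" by simp
  qed
  finally show ?thesis by simp
qed

definition phi :: "nat \<Rightarrow> nat \<Rightarrow> (nat set \<Rightarrow> 'a::field) \<Rightarrow> (nat \<Rightarrow> 'a) list \<Rightarrow> 'a" where
  "phi n h c vs = (\<Sum>I\<in>plucker_index n h. c I * plucker_coord h vs I)"

lemma sum_if_less: "(\<Sum>l\<in>{0..<m::nat}. if l < k then g l else 0) = (\<Sum>l\<in>{0..<min k m}. g l)"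
  by (induction m) (auto simp: min_def not_less le_Suc_eq)

lemma phi_change:
  assumes len: "length ws = k" "length us = k" "k \<le> Suc h" and sub: "set ws \<subseteq> lspan us"
  shows "\<exists>d. \<forall>ys. length ys + k = Suc h \<longrightarrow> phi n h c (ws@ys) = d * phi n h c (us@ys)"
proof -
  have "\<forall>i. i < k \<longrightarrow> (\<exists>a. ws!i = lincomb us a)"
    using sub len unfolding lspan_def by (auto simp: set_conv_nth)
  then obtain co where co: "\<And>i. i < k \<Longrightarrow> ws!i = lincomb us (co i)" by metis
  define A :: "'a mat" where "A = mat (Suc h) (Suc h) (\<lambda>(i,j). if i < k then (if j < k then co i j else 0)
      else (if i = j then 1 else 0))"
  have AM: "A \<in> carrier_mat (Suc h) (Suc h)" by (simp add: A_def)
  show ?thesis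
  proof (intro exI[of _ "det A"] allI impI)
    fix ys :: "(nat \<Rightarrow> 'a) list" assume ly: "length ys + k = Suc h"
    have M: "pmat h (ws@ys) I = A * pmat h (us@ys) I" for I
    proof (rule eq_matI)
      fix i j assume "i < dim_row (A * pmat h (us@ys) I)" "j < dim_col (A * pmat h (us@ys) I)"
      then have ij: "i < Suc h" "j < Suc h" by (auto simp: A_def pmat_def)
      let ?s = "sorted_list_of_set I ! j"
      have "(A * pmat h (us@ys) I) $$ (i,j) = (\<Sum>l\<in>{0..<Suc h}. A $$ (i,l) * ((us@ys)!l) ?s)"
        using ij by (simp add: A_def pmat_def scalar_prod_def)
      also have "\<dots> = ((ws@ys)!i) ?s"
      proof (cases "i < k")
        case True
        have "(\<Sum>l\<in>{0..<Suc h}. A $$ (i,l) * ((us@ys)!l) ?s) =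
              (\<Sum>l\<in>{0..<Suc h}. if l < k then co i l * (us!l) ?s else 0)"
          by (rule sum.cong) (use True len in \<open>auto simp: A_def nth_append\<close>)
        also have "\<dots> = (\<Sum>l\<in>{0..<k}. co i l * (us!l) ?s)"
          by (simp only: sum_if_less min_absorb1[OF len(3)])
        also have "\<dots> = (ws!i) ?s" using co[OF True] len by (simp add: lincomb_def atLeast0LessThan)
        finally show ?thesis using True len by (simp add: nth_append)
      next
        case False
        have "(\<Sum>l\<in>{0..<Suc h}. A $$ (i,l) * ((us@ys)!l) ?s) =
              (\<Sum>l\<in>{0..<Suc h}. if l = i then ((us@ys)!i) ?s else 0)"
          by (rule sum.cong) (use False ij in \<open>auto simp: A_def\<close>)
        also have "\<dots> = ((us@ys)!i) ?s" using ij by simp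
        finally show ?thesis using False len by (simp add: nth_append)
      qed
      finally show "pmat h (ws@ys) I $$ (i,j) = (A * pmat h (us@ys) I) $$ (i,j)"
        using ij by (simp add: pmat_def)
    qed (auto simp: A_def pmat_def)
    have "phi n h c (ws@ys) = (\<Sum>I\<in>plucker_index n h. c I * (det A * det (pmat h (us@ys) I)))"
      unfolding phi_def pc_det M
      by (rule sum.cong[OF refl], subst det_mult[OF AM]) (auto simp: pmat_def)
    also have "\<dots> = det A * phi n h c (us@ys)"
      unfolding phi_def pc_det by (simp add: sum_distrib_left algebra_simps)
    finally show "phi n h c (ws@ys) = det A * phi n h c (us@ys)" .
  qed
qed

lemma pc_lin:
  assumes k: "k \<le> h" and l: "length vs = Suc h"
  shows "plucker_coord h (vs[k := (\<lambda>j. a * x j + b * y j)]) I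
       = a * plucker_coord h (vs[k := x]) I + b * plucker_coord h (vs[k := y]) I"
proof -
  let ?s = "sorted_list_of_set I"
  have P: "(\<Prod>i\<le>h. (vs[k:=f]!i) (?s ! p i)) = f (?s ! p k) * (\<Prod>i\<in>{..h}-{k}. (vs!i) (?s ! p i))"
    for f p
    using k l by (subst prod.remove[of _ k]) (auto intro!: prod.cong simp: nth_list_update)
  show ?thesis
    unfolding plucker_coord_def P
    by (simp add: sum_distrib_left sum.distrib algebra_simps)
qed

lemma phi_lin:
  assumes k: "k \<le> h" and l: "length vs = Suc h"
  shows "phi n h c (vs[k := (\<lambda>j. a * x j + b * y j)])
       = a * phi n h c (vs[k := x]) + b * phi n h c (vs[k := y])"
  unfolding phi_def pc_lin[OF assms]
  by (simp add: sum_distrib_left sum.distrib algebra_simps)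

lemma phi_last_lin: "length us = h \<Longrightarrow> linf (\<lambda>y. phi n h c (us@[y]))"
  unfolding linf_def
proof (intro allI)
  fix a b x y assume l: "length us = h"
  have "phi n h c ((us@[x])[h := (\<lambda>j. a * x j + b * y j)]) =
        a * phi n h c ((us@[x])[h := x]) + b * phi n h c ((us@[x])[h := y])"
    by (rule phi_lin) (use l in auto)
  then show "phi n h c (us @ [\<lambda>j. a * x j + b * y j]) = a * phi n h c (us @ [x]) + b * phi n h c (us @ [y])"
    using l by (simp add: list_update_append)
qed

lemma phi_pen_lin:
  assumes l: "Suc (length vs) = h"
  shows "phi n h c (vs@[\<lambda>j. a * x j + b * y j, z]) = a * phi n h c (vs@[x,z]) + b * phi n h c (vs@[y,z])"
proof -
  have "phi n h c ((vs@[x,z])[length vs := (\<lambda>j. a * x j + b * y j)]) =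
        a * phi n h c ((vs@[x,z])[length vs := x]) + b * phi n h c ((vs@[x,z])[length vs := y])"
    by (rule phi_lin) (use l in auto)
  then show ?thesis by (simp add: list_update_append)
qed

lemma phi_exists:
  assumes "\<exists>I\<in>plucker_index n h. c I \<noteq> 0"
  shows "\<exists>vs. length vs = Suc h \<and> set vs \<subseteq> vecs n \<and> lindep_free vs \<and> phi n h c vs \<noteq> (0::'a::field)"
proof -
  obtain I0 where I0: "I0 \<in> plucker_index n h" "c I0 \<noteq> 0" using assms by blast
  have fI0: "finite I0" "I0 \<subseteq> {..n}" "card I0 = Suc h"
    using I0(1) by (auto simp: plucker_index_def finite_subset)
  define s0 where "s0 = sorted_list_of_set I0"
  have s0: "distinct s0" "set s0 = I0" "length s0 = Suc h" using fI0 by (auto simp: s0_def)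
  define vs :: "(nat \<Rightarrow> 'a) list" where "vs = map ee s0"
  have lv: "length vs = Suc h" using s0 by (simp add: vs_def)
  have sv: "set vs \<subseteq> vecs n" using s0 fI0 by (auto simp: vs_def vecs_def ee_def)
  have lf: "lindep_free vs"
    unfolding lindep_free_iff
  proof
    show "distinct vs" using s0 inj_on_subset[OF inj_ee subset_UNIV] by (simp add: vs_def distinct_map)
    have "set vs \<subseteq> ee ` {..n}" using s0 fI0 by (auto simp: vs_def)
    then show "ind (set vs)" using fv.independent_mono[OF ind_ee] by blast
  qed
  have pcJ: "plucker_coord h vs J = (if J = I0 then 1 else 0)" if J: "J \<in> plucker_index n h" for J
  proof (cases "J = I0")
    case True
    have "pmat h vs I0 = 1\<^sub>m (Suc h)"
    proof (rule eq_matI)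
      fix i j assume "i < dim_row (1\<^sub>m (Suc h) :: 'a mat)" "j < dim_col (1\<^sub>m (Suc h) :: 'a mat)"
      then have ij: "i < Suc h" "j < Suc h" by auto
      have "(s0 ! j = s0 ! i) = (j = i)" using s0 ij nth_eq_iff_index_eq by metis
      then show "pmat h vs I0 $$ (i, j) = 1\<^sub>m (Suc h) $$ (i, j)"
        using ij s0 by (simp add: pmat_def vs_def ee_def s0_def[symmetric])
    qed (auto simp: pmat_def)
    then show ?thesis using True by (simp add: pc_det)
  next
    case False
    have fJ: "finite J" "card J = Suc h" using J by (auto simp: plucker_index_def finite_subset)
    have "\<not> I0 \<subseteq> J" using False fJ fI0 card_subset_eq by metis
    then obtain x where x: "x \<in> I0" "x \<notin> J" by blast
    then obtain i where i: "i < Suc h" "s0 ! i = x" using s0 by (metis in_set_conv_nth)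
    have Z: "(\<Prod>i'\<le>h. (vs ! i') (sorted_list_of_set J ! p i')) = 0" if p: "p permutes {..h}" for p
    proof -
      have "p i \<le> h" using permutes_in_image[OF p] i by simp
      then have "sorted_list_of_set J ! p i \<in> J" using fJ by (metis le_imp_less_Suc length_sorted_list_of_set nth_mem set_sorted_list_of_set)
      then have "(vs ! i) (sorted_list_of_set J ! p i) = 0" using x i s0 by (auto simp: vs_def ee_def)
      then show ?thesis using i by (intro prod_zero) auto
    qed
    have "plucker_coord h vs J = 0" unfolding plucker_coord_def
      by (rule sum.neutral) (simp add: Z)
    then show ?thesis using False by simp
  qed
  have "phi n h c vs = (\<Sum>J\<in>plucker_index n h. if J = I0 then c I0 else 0)"
    unfolding phi_def by (rule sum.cong) (auto simp: pcJ)
  also have "\<dots> = c I0"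
  proof -
    have "finite (plucker_index n h)" by (rule finite_subset[of _ "Pow {..n}"]) (auto simp: plucker_index_def)
    then show ?thesis using I0(1) by simp
  qed
  finally have "phi n h c vs \<noteq> 0" using I0(2) by simp
  then show ?thesis using lv sv lf by (intro exI[of _ vs]) simp
qed



lemma lspan_append1: "lspan (us@[y]) = sp (insert y (set us))"
  by (simp add: lspan_eq)

lemma lindep_append1:
  assumes "lindep_free us" "y \<notin> lspan us"
  shows "lindep_free (us@[y])"
proof -
  have "y \<notin> set us" using assms(2) fv.span_superset lspan_eq by blast
  moreover have "ind (insert y (set us))"
    using fv.independent_insertI[of y "set us"] assms unfolding lindep_free_iff lspan_eq by blast
  ultimately show ?thesis using assms(1) unfolding lindep_free_iff by simp
qed

locale cx =
  fixes n h :: nat and c :: "nat set \<Rightarrow> 'a::field"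
  assumes h1: "1 \<le> h" and hn: "h < n" and cnz: "\<exists>I\<in>plucker_index n h. c I \<noteq> 0"
begin

abbreviation V :: "(nat \<Rightarrow> 'a) set" where "V \<equiv> vecs n"

definition KK :: "(nat \<Rightarrow> 'a) set set" where
  "KK = {X. \<exists>vs. length vs = h + 1 \<and> set vs \<subseteq> V \<and> lindep_free vs \<and> X = lspan vs \<and>
                     (\<Sum>I\<in>plucker_index n h. c I * plucker_coord h vs I) = 0}"

lemma MK:
  assumes "length ws = Suc h" "set ws \<subseteq> V" "lindep_free ws"
  shows "lspan ws \<in> KK \<longleftrightarrow> phi n h c ws = 0"
proof
  assume "lspan ws \<in> KK"
  then obtain vs where vs: "length vs = Suc h" "lspan ws = lspan vs" "phi n h c vs = 0"
    unfolding KK_def phi_def by auto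
  have "set ws \<subseteq> lspan vs" using vs(2) fv.span_superset[of "set ws"] by (simp add: lspan_eq)
  then obtain d where "\<forall>ys. length ys + Suc h = Suc h \<longrightarrow> phi n h c (ws@ys) = d * phi n h c (vs@ys)"
    using phi_change[of ws "Suc h" vs h n c] assms(1) vs(1) by auto
  then have "phi n h c ws = d * phi n h c vs" using spec[of _ "[]"] by simp
  then show "phi n h c ws = 0" using vs(3) by simp
next
  assume "phi n h c ws = 0"
  then show "lspan ws \<in> KK" unfolding KK_def phi_def using assms by auto
qed

lemma lam_U:
  assumes l: "length us = h" and u: "u \<in> lspan us"
  shows "phi n h c (us@[u]) = 0"
proof -
  have "set (us@[u]) \<subseteq> lspan (us@[0])"
    using u fv.span_superset fv.span_mono[of "set us" "insert 0 (set us)"] by (auto simp: lspan_eq)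
  then obtain d where "\<forall>ys. length ys + Suc h = Suc h \<longrightarrow> phi n h c ((us@[u])@ys) = d * phi n h c ((us@[0])@ys)"
    using phi_change[of "us@[u]" "Suc h" "us@[0]" h n c] l by auto
  then have "phi n h c (us@[u]) = d * phi n h c (us@[0])" using spec[of _ "[]"] by simp
  moreover have "phi n h c (us@[0]) = 0" using linf_zero[OF phi_last_lin[OF l]] .
  ultimately show ?thesis by simp
qed

lemma Xy:
  assumes us: "length us = h" "set us \<subseteq> V" "lindep_free us" and y: "y \<in> V" "y \<notin> lspan us"
  shows "vsub n (Suc h) (lspan (us@[y]))" "lspan us \<subseteq> lspan (us@[y])" "y \<in> lspan (us@[y])"
    "lindep_free (us@[y])"
proof -
  show "lindep_free (us@[y])" using lindep_append1 us(3) y(2) .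
  then show "vsub n (Suc h) (lspan (us@[y]))" unfolding vsub_def using us y
    by (intro exI[of _ "us@[y]"]) simp
  show "lspan us \<subseteq> lspan (us@[y])" by (simp add: lspan_eq fv.span_mono subset_insertI)
  show "y \<in> lspan (us@[y])" by (simp add: lspan_eq fv.span_base)
qed

lemma Xy_sub:
  assumes "fv.subspace Z" "lspan us \<subseteq> Z" "y \<in> Z"
  shows "lspan (us@[y]) \<subseteq> Z"
proof -
  have "set us \<subseteq> Z" using assms(2) fv.span_superset[of "set us"] unfolding lspan_eq by blast
  then have "insert y (set us) \<subseteq> Z" using assms(3) by blast
  then show ?thesis using fv.span_minimal[OF _ assms(1)] unfolding lspan_append1 by blast
qed

lemma U_vsub: "length us = h \<Longrightarrow> set us \<subseteq> V \<Longrightarrow> lindep_free us \<Longrightarrow> vsub n h (lspan us)"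
  unfolding vsub_def by blast

lemma XU:
  assumes us: "length us = h" "set us \<subseteq> V" "lindep_free us"
    and X: "vsub n (Suc h) X" "lspan us \<subseteq> X"
  shows "X \<in> KK \<longleftrightarrow> (\<forall>x\<in>X. phi n h c (us@[x]) = 0)"
proof -
  have "\<not> X \<subseteq> lspan us" using vsub_mono[OF X(1) U_vsub[OF us]] by auto
  then obtain x0 where x0: "x0 \<in> X" "x0 \<notin> lspan us" by blast
  have sX: "fv.subspace X" "X \<subseteq> V" using vsub_subspace[OF X(1)] by auto
  have x0v: "x0 \<in> V" using x0 sX by auto
  note XY = Xy[OF us x0v x0(2)]
  have "X = lspan (us@[x0])"
  proof -
    have "set (us@[x0]) \<subseteq> X" using X(2) x0 fv.span_superset lspan_eq by fastforce
    moreover have "ind (set (us@[x0]))" "card (set (us@[x0])) = Suc h"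
      using XY(4) us(1) unfolding lindep_free_iff by (auto simp: distinct_card)
    ultimately have "X = sp (set (us@[x0]))" using vsub_span_eq[OF X(1)] by simp
    then show ?thesis by (simp add: lspan_eq)
  qed
  then have KX: "X \<in> KK \<longleftrightarrow> phi n h c (us@[x0]) = 0"
    using MK[of "us@[x0]"] us x0v XY(4) by simp
  have L: "linf (\<lambda>y. phi n h c (us@[y]))" using phi_last_lin[OF us(1)] .
  show ?thesis
  proof
    assume "X \<in> KK"
    then have z: "phi n h c (us@[x0]) = 0" using KX by simp
    show "\<forall>x\<in>X. phi n h c (us@[x]) = 0"
    proof
      fix x assume "x \<in> X"
      then have "x \<in> sp (insert x0 (set us))" using \<open>X = lspan (us@[x0])\<close> by (simp add: lspan_append1)
      then obtain t where t: "x - fscale t x0 \<in> lspan us" unfolding fv.span_breakdown_eq lspan_eq by blast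
      have "phi n h c (us@[(x - fscale t x0) + fscale t x0]) = phi n h c (us@[x - fscale t x0]) + phi n h c (us@[fscale t x0])"
        using linf_add[OF L] .
      moreover have "phi n h c (us@[fscale t x0]) = t * phi n h c (us@[x0])" using linf_scale[OF L] .
      ultimately have "phi n h c (us@[x]) = phi n h c (us@[x - fscale t x0]) + t * phi n h c (us@[x0])"
        by simp
      then show "phi n h c (us@[x]) = 0" using lam_U[OF us(1) t] z by simp
    qed
  next
    assume "\<forall>x\<in>X. phi n h c (us@[x]) = 0"
    then show "X \<in> KK" using KX x0 by simp
  qed
qed

lemma sing_iff:
  assumes us: "length us = h" "set us \<subseteq> V" "lindep_free us"
  shows "singular n h KK (lspan us) \<longleftrightarrow> (\<forall>y\<in>V. phi n h c (us@[y]) = 0)"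
proof
  assume S: "singular n h KK (lspan us)"
  show "\<forall>y\<in>V. phi n h c (us@[y]) = 0"
  proof
    fix y assume y: "y \<in> V"
    show "phi n h c (us@[y]) = 0"
    proof (cases "y \<in> lspan us")
      case True then show ?thesis using lam_U us by blast
    next
      case False
      note XY = Xy[OF us y False]
      have "lspan (us@[y]) \<in> KK" using S XY(1,2) unfolding singular_def by auto
      then show ?thesis using XU[OF us XY(1,2)] XY(3) by blast
    qed
  qed
next
  assume A: "\<forall>y\<in>V. phi n h c (us@[y]) = 0"
  show "singular n h KK (lspan us)" unfolding singular_def
  proof (intro conjI allI impI)
    show "vsub n h (lspan us)" using U_vsub[OF us] .
    fix X assume X: "vsub n (h + 1) X \<and> lspan us \<subseteq> X"
    then have "X \<subseteq> V" using vsub_subspace by auto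
    then show "X \<in> KK" using XU[OF us] X A by auto
  qed
qed

lemma polar_eq:
  assumes us: "length us = h" "set us \<subseteq> V" "lindep_free us"
    and ns: "\<not> (\<forall>y\<in>V. phi n h c (us@[y]) = 0)"
  shows "polar n h KK (lspan us) = {y\<in>V. phi n h c (us@[y]) = 0}"
    "vsub n n {y\<in>V. phi n h c (us@[y]) = 0}"
proof -
  let ?E = "{y\<in>V. phi n h c (us@[y]) = 0}"
  let ?U = "lspan us"
  let ?P = "\<lambda>E. vsub n n E \<and> (\<forall>X. vsub n (h + 1) X \<and> ?U \<subseteq> X \<longrightarrow> (X \<in> KK \<longleftrightarrow> X \<subseteq> E))"
  have L: "linf (\<lambda>y. phi n h c (us@[y]))" using phi_last_lin[OF us(1)] .
  obtain y0 where y0: "y0 \<in> V" "phi n h c (us@[y0]) \<noteq> 0" using ns by blast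
  show vE: "vsub n n ?E" using vsub_ker[OF vsub_vecs L y0] .
  have sE: "fv.subspace ?E" using vsub_subspace[OF vE] by blast
  have UE: "?U \<subseteq> ?E" using lam_U[OF us(1)] vsub_subspace[OF U_vsub[OF us]] by auto
  have PE: "?P ?E"
  proof (intro conjI allI impI vE)
    fix X assume X: "vsub n (h + 1) X \<and> ?U \<subseteq> X"
    then have "X \<subseteq> V" using vsub_subspace by auto
    then show "X \<in> KK \<longleftrightarrow> X \<subseteq> ?E" using XU[OF us] X by auto
  qed
  have PEX: "X \<in> KK \<longleftrightarrow> X \<subseteq> ?E" if "vsub n (Suc h) X" "?U \<subseteq> X" for X
    using PE that by simp
  have uniq: "E' = ?E" if PE': "?P E'" for E'
  proof -
    have PEX': "X \<in> KK \<longleftrightarrow> X \<subseteq> E'" if "vsub n (Suc h) X" "?U \<subseteq> X" for X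
      using PE' that by simp
    have sE': "fv.subspace E'" "E' \<subseteq> V" using vsub_subspace[OF PE'[THEN conjunct1]] by blast+
    have "\<not> ?E \<subseteq> ?U" using vsub_mono[OF vE U_vsub[OF us]] hn by (meson not_le)
    then obtain x1 where x1: "x1 \<in> ?E" "x1 \<notin> ?U" by blast
    have x1v: "x1 \<in> V" using x1 by blast
    note X1 = Xy[OF us x1v x1(2)]
    have "lspan (us@[x1]) \<subseteq> ?E" using Xy_sub[OF sE UE] x1 by blast
    then have "lspan (us@[x1]) \<in> KK" using PEX[OF X1(1,2)] by blast
    then have "lspan (us@[x1]) \<subseteq> E'" using PEX'[OF X1(1,2)] by blast
    then have UE': "?U \<subseteq> E'" using X1(2) by blast
    show ?thesis
    proof
      show "E' \<subseteq> ?E"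
      proof
        fix y assume y: "y \<in> E'"
        show "y \<in> ?E"
        proof (cases "y \<in> ?U")
          case True then show ?thesis using UE by blast
        next
          case False
          have yv: "y \<in> V" using y sE' by blast
          note XY = Xy[OF us yv False]
          have "lspan (us@[y]) \<subseteq> E'" using Xy_sub[OF sE'(1) UE' y] .
          then have "lspan (us@[y]) \<in> KK" using PEX'[OF XY(1,2)] by blast
          then have "lspan (us@[y]) \<subseteq> ?E" using PEX[OF XY(1,2)] by blast
          then show ?thesis using XY(3) by blast
        qed
      qed
    next
      show "?E \<subseteq> E'"
      proof
        fix y assume y: "y \<in> ?E"
        show "y \<in> E'"
        proof (cases "y \<in> ?U")
          case True then show ?thesis using UE' by blast
        next
          case False
          have yv: "y \<in> V" using y by blast
          note XY = Xy[OF us yv False]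
          have "lspan (us@[y]) \<subseteq> ?E" using Xy_sub[OF sE UE y] .
          then have "lspan (us@[y]) \<in> KK" using PEX[OF XY(1,2)] by blast
          then have "lspan (us@[y]) \<subseteq> E'" using PEX'[OF XY(1,2)] by blast
          then show ?thesis using XY(3) by blast
        qed
      qed
    qed
  qed
  show "polar n h KK ?U = ?E" unfolding polar_def
    by (rule the_equality) (use PE uniq in blast)+
qed

end



context cx begin

lemma vsub_basis_list: "vsub n k U \<Longrightarrow> \<exists>us. length us = k \<and> set us \<subseteq> V \<and> lindep_free us \<and> U = lspan us"
  unfolding vsub_def by blast

lemma nonsing_iff:
  assumes us: "length us = h" "set us \<subseteq> V" "lindep_free us"
  shows "lspan us \<in> nonsingular n h KK \<longleftrightarrow> \<not> (\<forall>y\<in>V. phi n h c (us@[y]) = 0)"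
  unfolding nonsingular_def using sing_iff[OF us] U_vsub[OF us] by simp

lemma null_prop:
  assumes U: "U \<in> nonsingular n h KK"
  shows "U \<subseteq> polar n h KK U"
proof -
  obtain us where us: "length us = h" "set us \<subseteq> V" "lindep_free us" "U = lspan us"
    using U vsub_basis_list unfolding nonsingular_def by blast
  have ns: "\<not> (\<forall>y\<in>V. phi n h c (us@[y]) = 0)" using nonsing_iff[OF us(1-3)] U us(4) by simp
  have "U \<subseteq> V" using vsub_subspace[OF U_vsub[OF us(1-3)]] us(4) by simp
  then show ?thesis using polar_eq(1)[OF us(1-3) ns] us(4) lam_U[OF us(1)] by auto
qed

lemma polar_vsub:
  assumes U: "U \<in> nonsingular n h KK"
  shows "vsub n n (polar n h KK U)"
proof -
  obtain us where us: "length us = h" "set us \<subseteq> V" "lindep_free us" "U = lspan us"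
    using U vsub_basis_list unfolding nonsingular_def by blast
  have ns: "\<not> (\<forall>y\<in>V. phi n h c (us@[y]) = 0)" using nonsing_iff[OF us(1-3)] U us(4) by simp
  show ?thesis using polar_eq[OF us(1-3) ns] us(4) by simp
qed

lemma nonempty: "nonsingular n h KK \<noteq> {}"
proof -
  obtain vs where vs: "length vs = Suc h" "set vs \<subseteq> V" "lindep_free vs" "phi n h c vs \<noteq> 0"
    using phi_exists[OF cnz] by blast
  define us where "us = take h vs"
  have e: "vs = us @ [vs ! h]" using vs(1) unfolding us_def
    by (metis lessI take_Suc_conv_app_nth take_all order_refl)
  have lus: "length us = h" using vs(1) by (simp add: us_def)
  have sus: "set us \<subseteq> V" using vs(2) set_take_subset[of h vs] by (simp add: us_def)
  have fus: "lindep_free us"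
    using vs(3) fv.independent_mono[of "set vs" "set us"] set_take_subset[of h vs]
    unfolding lindep_free_iff us_def by simp
  have y: "vs ! h \<in> V" using vs(1,2) by (simp add: subset_iff)
  have "\<not> (\<forall>y\<in>V. phi n h c (us@[y]) = 0)" using vs(4) e y by metis
  then have "lspan us \<in> nonsingular n h KK" using nonsing_iff[OF lus sus fus] by simp
  then show ?thesis by blast
qed

lemma span_dim: "h \<le> dual_span_dim n (polar n h KK ` nonsingular n h KK)"
proof -
  let ?S = "polar n h KK ` nonsingular n h KK"
  have ex: "\<exists>m T. dual_subspace n m T \<and> ?S \<subseteq> T"
  proof (intro exI conjI)
    show "dual_subspace n n {E. vsub n n E \<and> {0} \<subseteq> E}"
      unfolding dual_subspace_def using vsub_zero[of n] by auto
    show "?S \<subseteq> {E. vsub n n E \<and> {0} \<subseteq> E}"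
    proof
      fix E assume "E \<in> ?S"
      then obtain U where U: "U \<in> nonsingular n h KK" "E = polar n h KK U" by blast
      have "vsub n n E" using polar_vsub[OF U(1)] U(2) by simp
      moreover then have "0 \<in> E" using vsub_subspace fv.subspace_0 by blast
      ultimately show "E \<in> {E. vsub n n E \<and> {0} \<subseteq> E}" by simp
    qed
  qed
  have main: "h \<le> m" if T: "dual_subspace n m T" "?S \<subseteq> T" for m T
  proof (rule ccontr)
    assume "\<not> h \<le> m"
    then have mh: "m < h" by simp
    obtain W where W: "m \<le> n" "vsub n (n - m) W" "T = {E. vsub n n E \<and> W \<subseteq> E}"
      using T(1) unfolding dual_subspace_def by blast
    obtain vs where vs: "length vs = Suc h" "set vs \<subseteq> V" "lindep_free vs" "phi n h c vs \<noteq> 0"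
      using phi_exists[OF cnz] by blast
    have X: "vsub n (Suc h) (lspan vs)" unfolding vsub_def using vs by blast
    have nK: "lspan vs \<notin> KK" using MK[OF vs(1-3)] vs(4) by simp
    have "Suc n < Suc h + (n - m)" using mh W(1) by linarith
    then obtain z where z: "z \<in> lspan vs" "z \<in> W" "z \<noteq> 0"
      using vsub_int[OF X W(2)] by blast
    have iz: "ind {z}" using z(3) fv.dependent_single by blast
    obtain B where B: "{z} \<subseteq> B" "B \<subseteq> lspan vs" "ind B" "finite B" "card B = Suc h" "lspan vs = sp B"
      using vsub_extend[OF X _ iz] z(1) by blast
    obtain us where us0: "set us = B - {z}" "distinct us" using finite_distinct_list[of "B - {z}"] B(4) by blast
    have lus: "length us = h" using us0 B(1,4,5) distinct_card[OF us0(2)] by (simp add: card_Diff_singleton)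
    have sV: "lspan vs \<subseteq> V" using vsub_subspace[OF X] by blast
    have sus: "set us \<subseteq> V" using us0 B(2) sV by blast
    have fus: "lindep_free us" unfolding lindep_free_iff using us0 fv.independent_mono[OF B(3)] by auto
    have zV: "z \<in> V" using z(1) sV by blast
    have ins: "insert z (set us) = B" using us0 B(1) by blast
    have fus2: "lindep_free (us@[z])" unfolding lindep_free_iff using us0 ins B(3) by simp
    have "lspan (us@[z]) = lspan vs" using ins B(6) by (simp add: lspan_eq)
    then have nz: "phi n h c (us@[z]) \<noteq> 0"
      using MK[of "us@[z]"] lus sus zV fus2 nK by auto
    then have ns: "lspan us \<in> nonsingular n h KK" using nonsing_iff[OF lus sus fus] zV by blast
    then have "polar n h KK (lspan us) \<in> T" using T(2) by blast
    then have "W \<subseteq> polar n h KK (lspan us)" using W(3) by blast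
    moreover have "\<not> (\<forall>y\<in>V. phi n h c (us@[y]) = 0)" using nz zV by blast
    ultimately have "phi n h c (us@[z]) = 0" using polar_eq(1)[OF lus sus fus] z(2) by blast
    then show False using nz by simp
  qed
  show ?thesis unfolding dual_span_dim_def
    by (rule LeastI2_ex) (use ex main in blast)+
qed

end



locale pencil = cx n h c for n h and c :: "nat set \<Rightarrow> 'a::field" +
  fixes vs :: "(nat \<Rightarrow> 'a) list" and a b :: "nat \<Rightarrow> 'a"
  assumes lvs: "Suc (length vs) = h" and sL: "set (vs@[a,b]) \<subseteq> vecs n" and fL: "lindep_free (vs@[a,b])"
begin

abbreviation cb :: "'a \<Rightarrow> 'a \<Rightarrow> nat \<Rightarrow> 'a" where "cb \<alpha> \<beta> \<equiv> (\<lambda>j. \<alpha> * a j + \<beta> * b j)"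
definition PP where "PP \<alpha> \<beta> = lspan (vs @ [cb \<alpha> \<beta>])"
definition ll where "ll = {X. vsub n h X \<and> lspan vs \<subseteq> X \<and> X \<subseteq> lspan (vs@[a,b])}"
definition mua where "mua y = phi n h c (vs@[a,y])"
definition mub where "mub y = phi n h c (vs@[b,y])"
abbreviation Zf :: "'a \<Rightarrow> 'a \<Rightarrow> bool" where "Zf \<alpha> \<beta> \<equiv> (\<forall>y\<in>V. \<alpha> * mua y + \<beta> * mub y = 0)"

lemma basics: "distinct vs" "a \<notin> set vs" "b \<notin> set vs" "a \<noteq> b" "ind (insert a (insert b (set vs)))"
  "a \<in> V" "b \<in> V" "set vs \<subseteq> V"
  using fL sL unfolding lindep_free_iff by auto

lemma cb_eq: "cb \<alpha> \<beta> = fscale \<alpha> a + fscale \<beta> b"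
  by (rule ext) (simp add: func_plus)

lemma cb_V: "cb \<alpha> \<beta> \<in> V"
  unfolding cb_eq by (rule fv.subspace_add[OF vecs_subspace fv.subspace_scale[OF vecs_subspace basics(6)]
     fv.subspace_scale[OF vecs_subspace basics(7)]])

lemma F0:
  assumes "cb \<alpha> \<beta> \<in> sp (set vs)"
  shows "\<alpha> = 0 \<and> \<beta> = 0"
proof -
  let ?B = "insert a (insert b (set vs))"
  have ia: "a \<notin> sp (?B - {a})" and ib: "b \<notin> sp (?B - {b})"
    using basics(5) unfolding fv.dependent_def by blast+
  have s1: "sp (set vs) \<subseteq> sp (?B - {a})" "sp (set vs) \<subseteq> sp (?B - {b})"
    using basics(2,3) by (intro fv.span_mono, blast)+
  have bB: "b \<in> sp (?B - {a})" using basics(4) by (intro fv.span_base) auto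
  have al: "\<alpha> = 0"
  proof (rule ccontr)
    assume na: "\<alpha> \<noteq> 0"
    have "a = fscale (1/\<alpha>) (cb \<alpha> \<beta> - fscale \<beta> b)"
      using na by (intro ext) (simp add: fun_diff_def field_simps)
    moreover have "fscale (1/\<alpha>) (cb \<alpha> \<beta> - fscale \<beta> b) \<in> sp (?B - {a})"
      using assms s1 bB by (intro fv.span_scale fv.span_diff) auto
    ultimately show False using ia by simp
  qed
  have "\<beta> = 0"
  proof (rule ccontr)
    assume nb: "\<beta> \<noteq> 0"
    have "b = fscale (1/\<beta>) (cb \<alpha> \<beta>)"
      using nb al by (intro ext) (simp add: field_simps)
    moreover have "fscale (1/\<beta>) (cb \<alpha> \<beta>) \<in> sp (?B - {b})"
      using assms s1 by (intro fv.span_scale) auto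
    ultimately show False using ib by simp
  qed
  then show ?thesis using al by simp
qed

lemma V0_vsub_aux: "lindep_free vs"
proof -
  have "ind (set vs)" using fv.independent_mono[OF basics(5)] by blast
  then show "lindep_free vs" using basics(1) by (simp add: lindep_free_iff)
qed

lemma V0_vsub: "vsub n (length vs) (lspan vs)"
  unfolding vsub_def using basics(8) V0_vsub_aux by blast

lemma W_sub: "fv.subspace (lspan (vs@[a,b]))" by (simp add: lspan_eq)

lemma F1:
  assumes nz: "\<alpha> \<noteq> 0 \<or> \<beta> \<noteq> 0"
  shows "PP \<alpha> \<beta> \<in> ll" "lindep_free (vs@[cb \<alpha> \<beta>])" "set (vs@[cb \<alpha> \<beta>]) \<subseteq> V"
    "length (vs@[cb \<alpha> \<beta>]) = h" "vsub n h (PP \<alpha> \<beta>)"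
proof -
  have ncb: "cb \<alpha> \<beta> \<notin> lspan vs" using F0 nz lspan_eq by blast
  show fl: "lindep_free (vs@[cb \<alpha> \<beta>])" using lindep_append1[OF _ ncb] V0_vsub_aux by blast
  show sv: "set (vs@[cb \<alpha> \<beta>]) \<subseteq> V" using cb_V basics(8) by simp
  show lh: "length (vs@[cb \<alpha> \<beta>]) = h" using lvs by simp
  show vP: "vsub n h (PP \<alpha> \<beta>)" unfolding vsub_def PP_def using fl sv lh by blast
  have "lspan vs \<subseteq> PP \<alpha> \<beta>" unfolding PP_def lspan_eq by (intro fv.span_mono) auto
  moreover have "PP \<alpha> \<beta> \<subseteq> lspan (vs@[a,b])"
  proof -
    have "set (vs@[cb \<alpha> \<beta>]) \<subseteq> lspan (vs@[a,b])"
    proof -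
      have "a \<in> lspan (vs@[a,b])" "b \<in> lspan (vs@[a,b])" "set vs \<subseteq> lspan (vs@[a,b])"
        unfolding lspan_eq by (auto intro: fv.span_base)
      then have "cb \<alpha> \<beta> \<in> lspan (vs@[a,b])" unfolding cb_eq
        by (intro fv.subspace_add[OF W_sub] fv.subspace_scale[OF W_sub])
      then show ?thesis using \<open>set vs \<subseteq> lspan (vs@[a,b])\<close> by simp
    qed
    then show ?thesis unfolding PP_def lspan_eq[of "vs@[cb \<alpha> \<beta>]"] using fv.span_minimal W_sub by blast
  qed
  ultimately show "PP \<alpha> \<beta> \<in> ll" unfolding ll_def using vP by blast
qed

lemma F2:
  assumes X: "X \<in> ll"
  shows "\<exists>\<alpha> \<beta>. (\<alpha> \<noteq> 0 \<or> \<beta> \<noteq> 0) \<and> X = PP \<alpha> \<beta>"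
proof -
  have Xv: "vsub n h X" "lspan vs \<subseteq> X" "X \<subseteq> lspan (vs@[a,b])" using X unfolding ll_def by auto
  have sX: "fv.subspace X" using vsub_subspace[OF Xv(1)] by blast
  have "\<not> X \<subseteq> lspan vs" using vsub_mono[OF Xv(1) V0_vsub] lvs by auto
  then obtain x where x: "x \<in> X" "x \<notin> lspan vs" by blast
  have "x \<in> sp (insert a (insert b (set vs)))" using x Xv(3) by (auto simp: lspan_eq)
  then obtain \<alpha> where "x - fscale \<alpha> a \<in> sp (insert b (set vs))" unfolding fv.span_breakdown_eq by blast
  then obtain \<beta> where v: "(x - fscale \<alpha> a) - fscale \<beta> b \<in> sp (set vs)" unfolding fv.span_breakdown_eq by blast
  let ?v = "(x - fscale \<alpha> a) - fscale \<beta> b"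
  have e: "cb \<alpha> \<beta> = x - ?v" by (rule ext) (simp add: fun_diff_def)
  have vX: "?v \<in> X" using v Xv(2) lspan_eq by auto
  have cX: "cb \<alpha> \<beta> \<in> X" unfolding e using fv.subspace_diff[OF sX x(1) vX] .
  have nz: "\<alpha> \<noteq> 0 \<or> \<beta> \<noteq> 0"
  proof (rule ccontr)
    assume "\<not> (\<alpha> \<noteq> 0 \<or> \<beta> \<noteq> 0)"
    then have vx: "?v = x" by (intro ext) (simp add: fun_diff_def)
    have "x \<in> sp (set vs)" using v unfolding vx .
    then show False using x(2) by (simp add: lspan_eq)
  qed
  have "PP \<alpha> \<beta> \<subseteq> X"
  proof -
    have "set (vs@[cb \<alpha> \<beta>]) \<subseteq> X" using cX Xv(2) fv.span_superset[of "set vs"] lspan_eq by auto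
    then show ?thesis unfolding PP_def lspan_eq[of "vs@[cb \<alpha> \<beta>]"] using fv.span_minimal sX by blast
  qed
  then have "PP \<alpha> \<beta> = X" using vsub_eq[OF F1(5)[OF nz] Xv(1)] by simp
  then show ?thesis using nz by blast
qed

lemma F4:
  assumes nz: "\<alpha> \<noteq> 0 \<or> \<beta> \<noteq> 0" "\<alpha>' \<noteq> 0 \<or> \<beta>' \<noteq> 0" and c: "cb \<alpha>' \<beta>' \<in> PP \<alpha> \<beta>"
  shows "PP \<alpha>' \<beta>' = PP \<alpha> \<beta>"
proof -
  have sP: "fv.subspace (PP \<alpha> \<beta>)" unfolding PP_def lspan_eq by simp
  have "set (vs@[cb \<alpha>' \<beta>']) \<subseteq> PP \<alpha> \<beta>"
    using c fv.span_superset[of "insert (cb \<alpha> \<beta>) (set vs)"] unfolding PP_def lspan_eq by auto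
  then have "PP \<alpha>' \<beta>' \<subseteq> PP \<alpha> \<beta>" unfolding PP_def[of \<alpha>' \<beta>'] lspan_eq[of "vs@[cb \<alpha>' \<beta>']"]
    using fv.span_minimal sP by blast
  then show ?thesis using vsub_eq[OF F1(5)[OF nz(2)] F1(5)[OF nz(1)]] by simp
qed

lemma F4r:
  assumes nz: "\<alpha> \<noteq> 0 \<or> \<beta> \<noteq> 0" and r: "r \<noteq> 0"
  shows "PP (r * \<alpha>) (r * \<beta>) = PP \<alpha> \<beta>"
proof (rule F4[OF nz])
  show "r * \<alpha> \<noteq> 0 \<or> r * \<beta> \<noteq> 0" using nz r by simp
  have "cb (r * \<alpha>) (r * \<beta>) = fscale r (cb \<alpha> \<beta>)" by (rule ext) (simp add: algebra_simps)
  moreover have "cb \<alpha> \<beta> \<in> PP \<alpha> \<beta>" unfolding PP_def lspan_eq by (simp add: fv.span_base)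
  ultimately show "cb (r * \<alpha>) (r * \<beta>) \<in> PP \<alpha> \<beta>" unfolding PP_def lspan_eq
    by (simp add: fv.span_scale)
qed

lemma F3:
  assumes nz: "\<alpha> \<noteq> 0 \<or> \<beta> \<noteq> 0" and e: "PP \<alpha>' \<beta>' = PP \<alpha> \<beta>"
  shows "\<exists>r. \<alpha>' = r * \<alpha> \<and> \<beta>' = r * \<beta>"
proof -
  have "cb \<alpha>' \<beta>' \<in> PP \<alpha>' \<beta>'" unfolding PP_def lspan_eq by (simp add: fv.span_base)
  then have "cb \<alpha>' \<beta>' \<in> sp (insert (cb \<alpha> \<beta>) (set vs))" using e unfolding PP_def lspan_eq by simp
  then obtain r where r: "cb \<alpha>' \<beta>' - fscale r (cb \<alpha> \<beta>) \<in> sp (set vs)"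
    unfolding fv.span_breakdown_eq by blast
  have "cb \<alpha>' \<beta>' - fscale r (cb \<alpha> \<beta>) = cb (\<alpha>' - r * \<alpha>) (\<beta>' - r * \<beta>)"
    by (rule ext) (simp add: fun_diff_def algebra_simps)
  then have "cb (\<alpha>' - r * \<alpha>) (\<beta>' - r * \<beta>) \<in> sp (set vs)" using r by simp
  then have "\<alpha>' - r * \<alpha> = 0 \<and> \<beta>' - r * \<beta> = 0" by (rule F0)
  then show ?thesis by auto
qed

lemma lam_eq: "phi n h c ((vs@[cb \<alpha> \<beta>])@[y]) = \<alpha> * mua y + \<beta> * mub y"
  using phi_pen_lin[OF lvs, of n c \<alpha> a \<beta> b y] by (simp add: mua_def mub_def)

lemma mua_lin: "linf mua"
proof -
  have "linf (\<lambda>y. phi n h c ((vs@[a])@[y]))" by (rule phi_last_lin) (use lvs in simp)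
  then show ?thesis by (simp add: mua_def[abs_def])
qed

lemma mub_lin: "linf mub"
proof -
  have "linf (\<lambda>y. phi n h c ((vs@[b])@[y]))" by (rule phi_last_lin) (use lvs in simp)
  then show ?thesis by (simp add: mub_def[abs_def])
qed

lemma G_ns:
  assumes nz: "\<alpha> \<noteq> 0 \<or> \<beta> \<noteq> 0"
  shows "PP \<alpha> \<beta> \<in> nonsingular n h KK \<longleftrightarrow> \<not> Zf \<alpha> \<beta>"
  using nonsing_iff[OF F1(4,3,2)[OF nz]] lam_eq unfolding PP_def by simp

lemma G_pol:
  assumes nz: "\<alpha> \<noteq> 0 \<or> \<beta> \<noteq> 0" and ns: "\<not> Zf \<alpha> \<beta>"
  shows "polar n h KK (PP \<alpha> \<beta>) = {y\<in>V. \<alpha> * mua y + \<beta> * mub y = 0}"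
    "vsub n n {y\<in>V. \<alpha> * mua y + \<beta> * mub y = 0}"
  using polar_eq[OF F1(4,3,2)[OF nz]] lam_eq ns unfolding PP_def by simp_all

end



lemma linf_comb: "linf f \<Longrightarrow> linf g \<Longrightarrow> linf (\<lambda>y. \<alpha> * f y + \<beta> * g y)"
  unfolding linf_def by (simp add: algebra_simps)

lemma linf_comb2: "linf f \<Longrightarrow> f (fscale c1 p + fscale c2 q) = c1 * f p + c2 * f q"
  by (simp add: linf_add linf_scale)

lemma field_elim:
  fixes \<alpha> \<beta> s t x y :: "'a::field"
  assumes e1: "\<alpha> * x + \<beta> * y = 0" and e2: "s * x + t * y = 0" and d: "\<alpha> * t \<noteq> \<beta> * s"
  shows "x = 0" "y = 0"
proof -
  have "(\<alpha> * t - \<beta> * s) * x = t * (\<alpha> * x + \<beta> * y) - \<beta> * (s * x + t * y)" by (simp add: algebra_simps)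
  then have "(\<alpha> * t - \<beta> * s) * x = 0" using e1 e2 by simp
  then show "x = 0" using d by simp
  have "(\<alpha> * t - \<beta> * s) * y = \<alpha> * (s * x + t * y) - s * (\<alpha> * x + \<beta> * y)" by (simp add: algebra_simps)
  then have "(\<alpha> * t - \<beta> * s) * y = 0" using e1 e2 by simp
  then show "y = 0" using d by simp
qed

lemma prop_pair:
  fixes \<alpha> \<beta> s t :: "'a::field"
  assumes "\<alpha> * t = \<beta> * s" "s \<noteq> 0 \<or> t \<noteq> 0"
  shows "\<exists>r. \<alpha> = r * s \<and> \<beta> = r * t"
proof (cases "s = 0")
  case True
  then have "t \<noteq> 0" "\<alpha> = 0" using assms by auto
  then show ?thesis using True by (intro exI[of _ "\<beta> / t"]) simp
next
  case False
  then show ?thesis using assms(1) by (intro exI[of _ "\<alpha> / s"]) (simp add: field_simps)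
qed

context pencil begin

abbreviation DD where "DD \<equiv> nonsingular n h KK"

lemma lam_lin: "linf (\<lambda>y. \<alpha> * mua y + \<beta> * mub y)"
  using linf_comb[OF mua_lin mub_lin] .

lemma ll_ne: "PP 1 0 \<in> ll" using F1(1)[of 1 0] by simp

lemma caseA:
  assumes "Zf 1 0" "Zf 0 1"
  shows "ll \<inter> DD = {}"
proof -
  have "X \<notin> DD" if X: "X \<in> ll" for X
  proof -
    obtain \<alpha> \<beta> where ab: "\<alpha> \<noteq> 0 \<or> \<beta> \<noteq> 0" "X = PP \<alpha> \<beta>" using F2[OF X] by blast
    have "Zf \<alpha> \<beta>" using assms by simp
    then show ?thesis using G_ns[OF ab(1)] ab(2) by simp
  qed
  then show ?thesis by blast
qed

lemma caseB:
  assumes nA: "\<not> (Zf 1 0 \<and> Zf 0 1)" and st: "s \<noteq> 0 \<or> t \<noteq> 0" "Zf s t"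
  shows "(\<exists>p. polar n h KK ` (ll \<inter> DD) = {p}) \<and> (\<exists>q. ll - DD = {q})"
proof -
  have B1: "\<exists>r. \<alpha> = r * s \<and> \<beta> = r * t" if Z: "Zf \<alpha> \<beta>" for \<alpha> \<beta>
  proof (cases "\<alpha> * t = \<beta> * s")
    case True then show ?thesis using prop_pair st(1) by blast
  next
    case False
    have "mua y = 0 \<and> mub y = 0" if y: "y \<in> V" for y
      using field_elim[OF Z[rule_format, OF y] st(2)[rule_format, OF y] False] by simp
    then show ?thesis using nA by simp
  qed
  define \<nu> where "\<nu> = (if s \<noteq> 0 then mub else mua)"
  define E0 where "E0 = {y\<in>V. \<nu> y = 0}"
  have B2: "{y\<in>V. \<alpha> * mua y + \<beta> * mub y = 0} = E0" if nZ: "\<not> Zf \<alpha> \<beta>" for \<alpha> \<beta>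
  proof (cases "s \<noteq> 0")
    case True
    have ma: "mua y = - (t / s) * mub y" if "y \<in> V" for y
      using st(2) that True by (simp add: field_simps add_eq_0_iff)
    let ?k = "\<beta> - \<alpha> * t / s"
    have ex: "\<alpha> * mua y + \<beta> * mub y = ?k * mub y" if "y \<in> V" for y
      using ma[OF that] by (simp add: algebra_simps)
    have "?k \<noteq> 0"
    proof
      assume "?k = 0"
      then have "Zf \<alpha> \<beta>" using ex by simp
      then show False using nZ by simp
    qed
    have "y \<in> {y\<in>V. \<alpha> * mua y + \<beta> * mub y = 0} \<longleftrightarrow> y \<in> E0" for y
      unfolding E0_def \<nu>_def using True ex[of y] \<open>?k \<noteq> 0\<close> by auto
    then show ?thesis by blast
  next
    case False
    then have t: "t \<noteq> 0" using st(1) by simp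
    have mb: "mub y = 0" if "y \<in> V" for y using st(2) that False t by simp
    have "\<alpha> \<noteq> 0"
    proof
      assume "\<alpha> = 0"
      then have "Zf \<alpha> \<beta>" using mb by simp
      then show False using nZ by simp
    qed
    then show ?thesis unfolding E0_def \<nu>_def using False mb by auto
  qed
  have ne: "ll \<inter> DD \<noteq> {}"
  proof (cases "Zf 1 0")
    case False
    then have "PP 1 0 \<in> DD" using G_ns[of 1 0] by simp
    then show ?thesis using ll_ne by blast
  next
    case True
    then have "\<not> Zf 0 1" using nA by blast
    then have "PP 0 1 \<in> DD" using G_ns[of 0 1] by simp
    moreover have "PP 0 1 \<in> ll" using F1(1)[of 0 1] by simp
    ultimately show ?thesis by blast
  qed
  have "polar n h KK ` (ll \<inter> DD) \<subseteq> {E0}"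
  proof
    fix E assume "E \<in> polar n h KK ` (ll \<inter> DD)"
    then obtain X where X: "X \<in> ll" "X \<in> DD" "E = polar n h KK X" by blast
    obtain \<alpha> \<beta> where ab: "\<alpha> \<noteq> 0 \<or> \<beta> \<noteq> 0" "X = PP \<alpha> \<beta>" using F2[OF X(1)] by blast
    have nZ: "\<not> Zf \<alpha> \<beta>" using G_ns[OF ab(1)] X(2) ab(2) by simp
    show "E \<in> {E0}" using G_pol(1)[OF ab(1) nZ] B2[OF nZ] X(3) ab(2) by simp
  qed
  then have P1: "polar n h KK ` (ll \<inter> DD) = {E0}" using ne by blast
  have P2: "ll - DD = {PP s t}"
  proof
    have "PP s t \<notin> DD" using G_ns[OF st(1)] st(2) by simp
    then show "{PP s t} \<subseteq> ll - DD" using F1(1)[OF st(1)] by simp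
    show "ll - DD \<subseteq> {PP s t}"
    proof
      fix X assume X: "X \<in> ll - DD"
      obtain \<alpha> \<beta> where ab: "\<alpha> \<noteq> 0 \<or> \<beta> \<noteq> 0" "X = PP \<alpha> \<beta>" using F2 X by blast
      have "Zf \<alpha> \<beta>" using G_ns[OF ab(1)] X ab(2) by simp
      then obtain r where r: "\<alpha> = r * s" "\<beta> = r * t" using B1 by blast
      then have "r \<noteq> 0" using ab(1) by auto
      then have "X = PP s t" using F4r[OF st(1)] ab(2) r by simp
      then show "X \<in> {PP s t}" by simp
    qed
  qed
  show ?thesis using P1 P2 by blast
qed


lemma caseC_y:
  assumes C: "\<And>s t. s \<noteq> 0 \<or> t \<noteq> 0 \<Longrightarrow> \<not> Zf s t"
  shows "\<exists>y1 y2. y1 \<in> V \<and> y2 \<in> V \<and> mua y1 = 1 \<and> mub y1 = 0 \<and> mua y2 = 0 \<and> mub y2 = 1"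
proof -
  obtain p where p: "p \<in> V" "mua p \<noteq> 0" using C[of 1 0] by auto
  obtain q where q: "q \<in> V" "- mub p * mua q + mua p * mub q \<noteq> 0" using C[of "- mub p" "mua p"] p(2) by auto
  define D where "D = mua p * mub q - mub p * mua q"
  have D: "D \<noteq> 0" using q(2) by (simp add: D_def algebra_simps)
  define y1 where "y1 = fscale (mub q / D) p + fscale (- mub p / D) q"
  define y2 where "y2 = fscale (- mua q / D) p + fscale (mua p / D) q"
  have V: "y1 \<in> V" "y2 \<in> V" unfolding y1_def y2_def
    using p(1) q(1) fv.subspace_add[OF vecs_subspace] fv.subspace_scale[OF vecs_subspace] by blast+
  have e1: "mua y1 = (mub q * mua p + (- mub p) * mua q) / D"
    unfolding y1_def linf_comb2[OF mua_lin] using D by (simp add: field_simps)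
  have e2: "mub y1 = (mub q * mub p + (- mub p) * mub q) / D"
    unfolding y1_def linf_comb2[OF mub_lin] using D by (simp add: field_simps)
  have e3: "mua y2 = ((- mua q) * mua p + mua p * mua q) / D"
    unfolding y2_def linf_comb2[OF mua_lin] using D by (simp add: field_simps)
  have e4: "mub y2 = ((- mua q) * mub p + mua p * mub q) / D"
    unfolding y2_def linf_comb2[OF mub_lin] using D by (simp add: field_simps)
  have "mub q * mua p + (- mub p) * mua q = D" "(- mua q) * mub p + mua p * mub q = D"
    by (simp_all add: D_def algebra_simps)
  then have "mua y1 = 1" "mub y1 = 0" "mua y2 = 0" "mub y2 = 1"
    using e1 e2 e3 e4 D by (simp_all add: algebra_simps)
  moreover
  ultimately show ?thesis using V by blast
qed

lemma caseC:
  assumes C: "\<And>s t. s \<noteq> 0 \<or> t \<noteq> 0 \<Longrightarrow> \<not> Zf s t"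
  shows "ll \<subseteq> DD \<and> polar n h KK ` ll \<in> dual_lines n \<and> inj_on (polar n h KK) ll"
proof (intro conjI)
  show "ll \<subseteq> DD"
  proof
    fix X assume X: "X \<in> ll"
    obtain \<alpha> \<beta> where ab: "\<alpha> \<noteq> 0 \<or> \<beta> \<noteq> 0" "X = PP \<alpha> \<beta>" using F2[OF X] by blast
    show "X \<in> DD" using G_ns[OF ab(1)] C[OF ab(1)] ab(2) by simp
  qed
  show "inj_on (polar n h KK) ll"
  proof (rule inj_onI)
    fix X X' assume X: "X \<in> ll" and X': "X' \<in> ll" and eq: "polar n h KK X = polar n h KK X'"
    obtain \<alpha> \<beta> where ab: "\<alpha> \<noteq> 0 \<or> \<beta> \<noteq> 0" "X = PP \<alpha> \<beta>" using F2[OF X] by blast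
    obtain \<alpha>' \<beta>' where ab': "\<alpha>' \<noteq> 0 \<or> \<beta>' \<noteq> 0" "X' = PP \<alpha>' \<beta>'" using F2[OF X'] by blast
    let ?l = "\<lambda>y. \<alpha> * mua y + \<beta> * mub y"
    let ?l' = "\<lambda>y. \<alpha>' * mua y + \<beta>' * mub y"
    have Eq: "{y\<in>V. ?l y = 0} = {y\<in>V. ?l' y = 0}"
      using eq G_pol(1)[OF ab(1) C[OF ab(1)]] G_pol(1)[OF ab'(1) C[OF ab'(1)]] ab(2) ab'(2) by simp
    obtain y0 where y0: "y0 \<in> V" "?l y0 \<noteq> 0" using C[OF ab(1)] by blast
    define r where "r = ?l' y0 / ?l y0"
    have L: "linf ?l" "linf ?l'" using lam_lin by blast+
    have Z: "Zf (\<alpha>' - r * \<alpha>) (\<beta>' - r * \<beta>)"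
    proof
      fix y assume y: "y \<in> V"
      let ?z = "y - fscale (?l y / ?l y0) y0"
      have zV: "?z \<in> V" using y y0 fv.subspace_diff[OF vecs_subspace] fv.subspace_scale[OF vecs_subspace] by blast
      have "?l ?z = ?l y - (?l y / ?l y0) * ?l y0" using linf_diff[OF L(1)] linf_scale[OF L(1)] by simp
      then have "?l ?z = 0" using y0(2) by simp
      then have "?z \<in> {y\<in>V. ?l' y = 0}" using Eq zV by blast
      then have "?l' y - (?l y / ?l y0) * ?l' y0 = 0"
        using linf_diff[OF L(2), of y] linf_scale[OF L(2)] by simp
      then have "?l' y = r * ?l y" unfolding r_def by (simp add: field_simps)
      then show "(\<alpha>' - r * \<alpha>) * mua y + (\<beta>' - r * \<beta>) * mub y = 0" by (simp add: algebra_simps)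
    qed
    then have "\<alpha>' - r * \<alpha> = 0 \<and> \<beta>' - r * \<beta> = 0" using C by blast
    then have r: "\<alpha>' = r * \<alpha>" "\<beta>' = r * \<beta>" by auto
    then have "r \<noteq> 0" using ab'(1) by auto
    then have "X' = X" using F4r[OF ab(1)] r ab(2) ab'(2) by simp
    then show "X = X'" by simp
  qed
  show "polar n h KK ` ll \<in> dual_lines n"
  proof -
    obtain y1 y2 where y: "y1 \<in> V" "y2 \<in> V" "mua y1 = 1" "mub y1 = 0" "mua y2 = 0" "mub y2 = 1"
      using caseC_y[OF C] by blast
    have n1: "n = Suc (n - 1)" using hn by simp
    define E1 where "E1 = {y\<in>V. mua y = 0}"
    have vE1: "vsub n n E1" unfolding E1_def using vsub_ker[OF vsub_vecs mua_lin y(1)] y(3) by simp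
    define Z where "Z = {y\<in>V. mua y = 0 \<and> mub y = 0}"
    have "Z = {y\<in>E1. mub y = 0}" unfolding Z_def E1_def by auto
    moreover have "y2 \<in> E1" using y unfolding E1_def by simp
    moreover have vE1': "vsub n (Suc (n - 1)) E1" using vE1 n1 by metis
    ultimately have vZ: "vsub n (n - 1) Z" using vsub_ker[OF vE1' mub_lin] y(6) by simp
    have dec: "y - fscale (mua y) y1 - fscale (mub y) y2 \<in> Z" if "y \<in> V" for y
    proof -
      have "y - fscale (mua y) y1 - fscale (mub y) y2 \<in> V"
        using that y(1,2) fv.subspace_diff[OF vecs_subspace] fv.subspace_scale[OF vecs_subspace] by blast
      moreover have "mua (y - fscale (mua y) y1 - fscale (mub y) y2) = 0"
        using y by (simp add: linf_diff[OF mua_lin] linf_scale[OF mua_lin])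
      moreover have "mub (y - fscale (mua y) y1 - fscale (mub y) y2) = 0"
        using y by (simp add: linf_diff[OF mub_lin] linf_scale[OF mub_lin])
      ultimately show ?thesis unfolding Z_def by simp
    qed
    have eqT: "polar n h KK ` ll = {E. vsub n n E \<and> Z \<subseteq> E}"
    proof
      show "polar n h KK ` ll \<subseteq> {E. vsub n n E \<and> Z \<subseteq> E}"
      proof
        fix E assume "E \<in> polar n h KK ` ll"
        then obtain X where X: "X \<in> ll" "E = polar n h KK X" by blast
        obtain \<alpha> \<beta> where ab: "\<alpha> \<noteq> 0 \<or> \<beta> \<noteq> 0" "X = PP \<alpha> \<beta>" using F2[OF X(1)] by blast
        have "E = {y\<in>V. \<alpha> * mua y + \<beta> * mub y = 0}" using G_pol(1)[OF ab(1) C[OF ab(1)]] X(2) ab(2) by simp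
        moreover have "Z \<subseteq> {y\<in>V. \<alpha> * mua y + \<beta> * mub y = 0}" unfolding Z_def by auto
        ultimately show "E \<in> {E. vsub n n E \<and> Z \<subseteq> E}" using G_pol(2)[OF ab(1) C[OF ab(1)]] by simp
      qed
      show "{E. vsub n n E \<and> Z \<subseteq> E} \<subseteq> polar n h KK ` ll"
      proof
        fix E assume "E \<in> {E. vsub n n E \<and> Z \<subseteq> E}"
        then have E: "vsub n n E" "Z \<subseteq> E" by auto
        have sE: "fv.subspace E" "E \<subseteq> V" using vsub_subspace[OF E(1)] by auto
        have key: "\<exists>\<alpha> \<beta>. (\<alpha> \<noteq> 0 \<or> \<beta> \<noteq> 0) \<and> {y\<in>V. \<alpha> * mua y + \<beta> * mub y = 0} \<subseteq> E"
        proof (cases "y1 \<in> E")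
          case True
          have "{y\<in>V. 0 * mua y + 1 * mub y = 0} \<subseteq> E"
          proof
            fix y assume yy: "y \<in> {y\<in>V. 0 * mua y + 1 * mub y = 0}"
            then have yV: "y \<in> V" and mb: "mub y = 0" by auto
            have "y = (y - fscale (mua y) y1 - fscale (mub y) y2) + fscale (mua y) y1"
              using mb by (intro ext) (simp add: fun_diff_def func_plus)
            moreover have "y - fscale (mua y) y1 - fscale (mub y) y2 \<in> E" using dec[OF yV] E(2) by blast
            ultimately show "y \<in> E" using fv.subspace_add[OF sE(1)] fv.subspace_scale[OF sE(1) True] by metis
          qed
          then show ?thesis by (intro exI[of _ 0] exI[of _ 1]) simp
        next
          case False
          have vi: "vsub n (Suc n) (sp (insert y1 E))" using vsub_insert[OF E(1) y(1) False] .
          have "sp (insert y1 E) \<subseteq> V" using vsub_subspace[OF vi] by blast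
          then have "sp (insert y1 E) = V" using vsub_eq[OF vi vsub_vecs] by simp
          then have "y2 \<in> sp (insert y1 E)" using y(2) by simp
          then obtain t where t: "y2 - fscale t y1 \<in> sp E" unfolding fv.span_breakdown_eq by blast
          have eE: "y2 - fscale t y1 \<in> E" using t fv.span_minimal[OF order_refl sE(1)] by blast
          have "{y\<in>V. 1 * mua y + t * mub y = 0} \<subseteq> E"
          proof
            fix y assume yy: "y \<in> {y\<in>V. 1 * mua y + t * mub y = 0}"
            then have yV: "y \<in> V" and ma: "mua y = - (t * mub y)" by (auto simp: add_eq_0_iff)
            have "y = (y - fscale (mua y) y1 - fscale (mub y) y2) + fscale (mub y) (y2 - fscale t y1)"
              using ma by (intro ext) (simp add: fun_diff_def func_plus algebra_simps)
            moreover have "y - fscale (mua y) y1 - fscale (mub y) y2 \<in> E" using dec[OF yV] E(2) by blast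
            ultimately show "y \<in> E" using fv.subspace_add[OF sE(1)] fv.subspace_scale[OF sE(1) eE] by metis
          qed
          then show ?thesis by (intro exI[of _ 1] exI[of _ t]) simp
        qed
        then obtain \<alpha> \<beta> where ab: "\<alpha> \<noteq> 0 \<or> \<beta> \<noteq> 0" "{y\<in>V. \<alpha> * mua y + \<beta> * mub y = 0} \<subseteq> E" by blast
        have "{y\<in>V. \<alpha> * mua y + \<beta> * mub y = 0} = E"
          using vsub_eq[OF G_pol(2)[OF ab(1) C[OF ab(1)]] E(1) ab(2)] by simp
        then have "E = polar n h KK (PP \<alpha> \<beta>)" using G_pol(1)[OF ab(1) C[OF ab(1)]] by simp
        then show "E \<in> polar n h KK ` ll" using F1(1)[OF ab(1)] by blast
      qed
    qed
    show ?thesis unfolding dual_lines_def dual_subspace_def using eqT vZ hn h1 by auto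
  qed
qed

end




lemma one_of:
  assumes ne: "l \<noteq> {}"
    and d: "(l \<subseteq> D \<and> f ` l \<in> L2 \<and> inj_on f l) \<or> ((\<exists>p. f ` (l \<inter> D) = {p}) \<and> (\<exists>q. l - D = {q})) \<or> l \<inter> D = {}"
  shows "let c1 = (l \<subseteq> D \<and> f ` l \<in> L2 \<and> inj_on f l);
            c2 = ((\<exists>p. f ` (l \<inter> D) = {p}) \<and> (\<exists>q. l - D = {q}));
            c3 = (l \<inter> D = {})
        in (c1 \<and> \<not> c2 \<and> \<not> c3) \<or> (\<not> c1 \<and> c2 \<and> \<not> c3) \<or> (\<not> c1 \<and> \<not> c2 \<and> c3)"
proof -
  have a: "l \<subseteq> D \<Longrightarrow> \<not> (\<exists>q. l - D = {q})" by auto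
  have b: "l \<subseteq> D \<Longrightarrow> l \<inter> D \<noteq> {}" using ne by auto
  have c: "(\<exists>p. f ` (l \<inter> D) = {p}) \<Longrightarrow> l \<inter> D \<noteq> {}" by auto
  show ?thesis unfolding Let_def using d a b c by blast
qed

context pencil begin

lemma pencil_main:
  "let c1 = (ll \<subseteq> DD \<and> polar n h KK ` ll \<in> dual_lines n \<and> inj_on (polar n h KK) ll);
       c2 = ((\<exists>p. polar n h KK ` (ll \<inter> DD) = {p}) \<and> (\<exists>q. ll - DD = {q}));
       c3 = (ll \<inter> DD = {})
   in (c1 \<and> \<not> c2 \<and> \<not> c3) \<or> (\<not> c1 \<and> c2 \<and> \<not> c3) \<or> (\<not> c1 \<and> \<not> c2 \<and> c3)"
proof (rule one_of)
  show "ll \<noteq> {}" using ll_ne by blast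
  show "(ll \<subseteq> DD \<and> polar n h KK ` ll \<in> dual_lines n \<and> inj_on (polar n h KK) ll) \<or>
    ((\<exists>p. polar n h KK ` (ll \<inter> DD) = {p}) \<and> (\<exists>q. ll - DD = {q})) \<or> ll \<inter> DD = {}"
  proof (cases "Zf 1 0 \<and> Zf 0 1")
    case True
    then show ?thesis using caseA by blast
  next
    case nA: False
    show ?thesis
    proof (cases "\<exists>s t. (s \<noteq> 0 \<or> t \<noteq> 0) \<and> Zf s t")
      case True
      then obtain s t where "s \<noteq> 0 \<or> t \<noteq> 0" "Zf s t" by blast
      then show ?thesis using caseB[OF nA] by blast
    next
      case False
      then have "\<And>s t. s \<noteq> 0 \<or> t \<noteq> 0 \<Longrightarrow> \<not> Zf s t" by blast
      then show ?thesis using caseC by blast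
    qed
  qed
qed

end

theorem theorem5p3:
  fixes n h :: nat and K :: "(nat \<Rightarrow> 'a::field) set set"
  assumes "1 \<le> h" and "h \<le> n - 1"
    and "linear_complex n h K"
  shows "linear_mapping (gr_points n (h - 1)) (gr_lines n (h - 1)) (dual_points n) (dual_lines n)
            (nonsingular n h K) (polar n h K)
       \<and> nonsingular n h K \<noteq> {}
       \<and> (\<forall>U\<in>nonsingular n h K. U \<subseteq> polar n h K U)
       \<and> h \<le> dual_span_dim n (polar n h K ` nonsingular n h K)"
proof -
  obtain c :: "nat set \<Rightarrow> 'a" where c: "\<exists>I\<in>plucker_index n h. c I \<noteq> 0"
    and K: "K = {X. \<exists>vs. length vs = h + 1 \<and> set vs \<subseteq> vecs n \<and> lindep_free vs \<and> X = lspan vs \<and>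
                     (\<Sum>I\<in>plucker_index n h. c I * plucker_coord h vs I) = 0}"
    using assms(3) unfolding linear_complex_def by blast
  have hn: "h < n" using assms(1,2) by linarith
  interpret cx n h c using assms(1) hn c by unfold_locales
  have KK: "K = KK" unfolding K KK_def ..
  have h1: "h - 1 + 1 = h" "h - 1 + 2 = Suc h" using assms(1) by auto
  have LM: "linear_mapping (gr_points n (h - 1)) (gr_lines n (h - 1)) (dual_points n) (dual_lines n)
            (nonsingular n h KK) (polar n h KK)"
    unfolding linear_mapping_def
  proof (intro conjI ballI)
    show "nonsingular n h KK \<subseteq> gr_points n (h - 1)"
      unfolding gr_points_def h1 nonsingular_def by blast
    show "polar n h KK ` nonsingular n h KK \<subseteq> dual_points n"
      unfolding dual_points_def using polar_vsub by blast
    fix l :: "(nat \<Rightarrow> 'a) set set" assume "l \<in> gr_lines n (h - 1)"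
    then obtain U W :: "(nat \<Rightarrow> 'a) set" where UW: "vsub n (h - 1) U" "vsub n (Suc h) W" "U \<subseteq> W"
      "l = {X. vsub n h X \<and> U \<subseteq> X \<and> X \<subseteq> W}"
      unfolding gr_lines_def h1 by blast
    obtain vs where vs: "length vs = h - 1" "set vs \<subseteq> V" "lindep_free vs" "U = lspan vs"
      using UW(1) unfolding vsub_def by blast
    have ivs: "ind (set vs)" "distinct vs" using vs(3) unfolding lindep_free_iff by auto
    have svW: "set vs \<subseteq> W" using vs(4) UW(3) fv.span_superset[of "set vs"] lspan_eq by auto
    obtain B where B: "set vs \<subseteq> B" "B \<subseteq> W" "ind B" "finite B" "card B = Suc h" "W = sp B"
      using vsub_extend[OF UW(2) svW ivs(1)] by blast
    have "card (B - set vs) = 2"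
      using B(1,4,5) vs(1) distinct_card[OF ivs(2)] assms(1) by (simp add: card_Diff_subset)
    then obtain a b where ab: "B - set vs = {a, b}" "a \<noteq> b" by (meson card_2_iff)
    have setL: "set (vs@[a,b]) = B" using ab(1) B(1) by auto
    have distL: "distinct (vs@[a,b])" using ab ivs(2) by auto
    have fL: "lindep_free (vs@[a,b])" unfolding lindep_free_iff using distL setL B(3) by simp
    have sL: "set (vs@[a,b]) \<subseteq> vecs n" using setL B(2) vsub_subspace[OF UW(2)] by auto
    have lvs: "Suc (length vs) = h" using vs(1) assms(1) by simp
    interpret pencil n h c vs a b using lvs sL fL by unfold_locales
    have "lspan (vs@[a,b]) = W" using setL B(6) by (simp add: lspan_eq)
    then have "l = ll" unfolding ll_def UW(4) vs(4) by simp
    then show "let c1 = (l \<subseteq> nonsingular n h KK \<and> polar n h KK ` l \<in> dual_lines n \<and> inj_on (polar n h KK) l);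
            c2 = ((\<exists>p. polar n h KK ` (l \<inter> nonsingular n h KK) = {p}) \<and> (\<exists>q. l - nonsingular n h KK = {q}));
            c3 = (l \<inter> nonsingular n h KK = {})
        in (c1 \<and> \<not> c2 \<and> \<not> c3) \<or> (\<not> c1 \<and> c2 \<and> \<not> c3) \<or> (\<not> c1 \<and> \<not> c2 \<and> c3)"
      using pencil_main by simp
  qed
  show ?thesis unfolding KK using LM nonempty null_prop span_dim by blast
qed


end
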